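(* Let $k,l\ge1$ be integers. For all finitely encoded one-parameter persistence modules $M,N$ over $\mathbb R$, \[ \mathrm{d}_{\mathrm T_l}(M,N)\le\max\{1,\tfrac lk\}\,\mathrm{d}_{\mathrm T_k}(M,N). \]
   Context: Finitely encoded persistence modules over $\mathbb R$ form an abelian category and each is isomorphic to a finite direct sum of interval modules over intervals of $\mathbb R$ (possibly unbounded, each end open or closed). For $k\ge1$, $\mathrm T_k(M)$ is the sum of the lengths of the $k$ longest intervals in the barcode of $M$ (all intervals if there are fewer than $k$); it is an amplitude (a function to $[0,\infty]$ vanishing on $0$, monotone under sub- and quotient objects and subadditive on short exact sequences). For an amplitude $\alpha$, the path metric $\mathrm{d}_\alpha(M,N)$ is the infimum, over zigzags $M\xleftarrow{\gamma_1}C_1\xrightarrow{\gamma_2}\cdots\xrightarrow{\gamma_n}N$ of finitely encoded modules, of $\sum_i\alpha(\ker\gamma_i)+\alpha(\operatorname{coker}\gamma_i)$ ($\inf\emptyset=\infty$). *)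

theory Defs
  imports Main "HOL-Library.Extended_Real"
begin

text \<open>Every pointwise finite-dimensional vector space over 'k embeds into the ambient
  space of sequences nat => 'k; persistence modules are realised as families of subspaces.\<close>

type_synonym 'k vec = "nat \<Rightarrow> 'k"

definition vzero :: "'k::field vec" where "vzero = (\<lambda>_. 0)"
definition vadd :: "'k::field vec \<Rightarrow> 'k vec \<Rightarrow> 'k vec" where "vadd u v = (\<lambda>i. u i + v i)"
definition vscale :: "'k::field \<Rightarrow> 'k vec \<Rightarrow> 'k vec" where "vscale c v = (\<lambda>i. c * v i)"

definition vsubspace :: "'k::field vec set \<Rightarrow> bool" where
  "vsubspace S \<longleftrightarrow> vzero \<in> S \<and> (\<forall>u\<in>S. \<forall>v\<in>S. vadd u v \<in> S) \<and> (\<forall>c. \<forall>v\<in>S. vscale c v \<in> S)"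

definition vspan :: "'k::field vec set \<Rightarrow> 'k vec set" where
  "vspan A = {v. \<exists>B c. finite B \<and> B \<subseteq> A \<and> v = (\<lambda>i. \<Sum>b\<in>B. c b * b i)}"

definition fin_dim :: "'k::field vec set \<Rightarrow> bool" where
  "fin_dim S \<longleftrightarrow> (\<exists>B. finite B \<and> B \<subseteq> S \<and> S = vspan B)"

definition lin_on :: "'k::field vec set \<Rightarrow> 'k vec set \<Rightarrow> ('k vec \<Rightarrow> 'k vec) \<Rightarrow> bool" where
  "lin_on S T f \<longleftrightarrow> (\<forall>v\<in>S. f v \<in> T) \<and> (\<forall>u\<in>S. \<forall>v\<in>S. f (vadd u v) = vadd (f u) (f v))
      \<and> (\<forall>c. \<forall>v\<in>S. f (vscale c v) = vscale c (f v))"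

record 'k pmod =
  sp :: "real \<Rightarrow> 'k vec set"
  mp :: "real \<Rightarrow> real \<Rightarrow> 'k vec \<Rightarrow> 'k vec"

definition is_pmod :: "('k::field) pmod \<Rightarrow> bool" where
  "is_pmod M \<longleftrightarrow> (\<forall>t. vsubspace (sp M t))
     \<and> (\<forall>s t. s \<le> t \<longrightarrow> lin_on (sp M s) (sp M t) (mp M s t))
     \<and> (\<forall>t. \<forall>v\<in>sp M t. mp M t t v = v)
     \<and> (\<forall>r s t v. r \<le> s \<longrightarrow> s \<le> t \<longrightarrow> v \<in> sp M r \<longrightarrow> mp M s t (mp M r s v) = mp M r t v)"

text \<open>Finitely encoded (Miller): M is isomorphic to the pullback of a module of finite-dimensional
  spaces over a finite poset P along a poset morphism R -> P. Since R is totally ordered the image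
  is a finite chain (so P may be taken inside nat), fibres are intervals, and being such a pullback
  amounts to: pointwise finite dimensional and all structure maps inside one fibre are bijective.\<close>

definition fin_enc :: "('k::field) pmod \<Rightarrow> bool" where
  "fin_enc M \<longleftrightarrow> is_pmod M \<and> (\<forall>t. fin_dim (sp M t))
     \<and> (\<exists>\<pi>::real \<Rightarrow> nat. mono \<pi> \<and> finite (range \<pi>)
          \<and> (\<forall>s t. s \<le> t \<and> \<pi> s = \<pi> t \<longrightarrow> bij_betw (mp M s t) (sp M s) (sp M t)))"

definition is_hom :: "('k::field) pmod \<Rightarrow> 'k pmod \<Rightarrow> (real \<Rightarrow> 'k vec \<Rightarrow> 'k vec) \<Rightarrow> bool" where
  "is_hom M N f \<longleftrightarrow> (\<forall>t. lin_on (sp M t) (sp N t) (f t))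
     \<and> (\<forall>s t v. s \<le> t \<longrightarrow> v \<in> sp M s \<longrightarrow> f t (mp M s t v) = mp N s t (f s v))"

definition pmod_iso :: "('k::field) pmod \<Rightarrow> 'k pmod \<Rightarrow> bool" where
  "pmod_iso M N \<longleftrightarrow> (\<exists>f. is_hom M N f \<and> (\<forall>t. bij_betw (f t) (sp M t) (sp N t)))"

definition kerm :: "('k::field) pmod \<Rightarrow> (real \<Rightarrow> 'k vec \<Rightarrow> 'k vec) \<Rightarrow> 'k pmod" where
  "kerm M f = \<lparr>sp = (\<lambda>t. {v \<in> sp M t. f t v = vzero}), mp = mp M\<rparr>"

definition is_coker :: "('k::field) pmod \<Rightarrow> 'k pmod \<Rightarrow> (real \<Rightarrow> 'k vec \<Rightarrow> 'k vec)
     \<Rightarrow> 'k pmod \<Rightarrow> (real \<Rightarrow> 'k vec \<Rightarrow> 'k vec) \<Rightarrow> bool" where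
  "is_coker M N f Q q \<longleftrightarrow> is_pmod Q \<and> is_hom N Q q \<and> (\<forall>t. q t ` sp N t = sp Q t)
     \<and> (\<forall>t. {v \<in> sp N t. q t v = vzero} = f t ` sp M t)"

definition is_intv :: "real set \<Rightarrow> bool" where
  "is_intv I \<longleftrightarrow> I \<noteq> {} \<and> (\<forall>x\<in>I. \<forall>z\<in>I. \<forall>y. x \<le> y \<and> y \<le> z \<longrightarrow> y \<in> I)"

definition intsum :: "real set list \<Rightarrow> ('k::field) pmod" where
  "intsum Is = \<lparr>sp = (\<lambda>t. {v. \<forall>i. (i < length Is \<longrightarrow> t \<notin> Is ! i \<longrightarrow> v i = 0)
                                   \<and> (length Is \<le> i \<longrightarrow> v i = 0)}),
                mp = (\<lambda>s t v i. if i < length Is \<and> t \<in> Is ! i then v i else 0)\<rparr>"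

definition ilen :: "real set \<Rightarrow> ereal" where
  "ilen I = (SUP x\<in>I. ereal x) - (INF x\<in>I. ereal x)"

definition topk :: "nat \<Rightarrow> real set list \<Rightarrow> ereal" where
  "topk k Is = sum_list (take k (rev (sort (map ilen Is))))"

definition Tk :: "nat \<Rightarrow> ('k::field) pmod \<Rightarrow> ereal" where
  "Tk k M = (THE x. \<exists>Is. (\<forall>I\<in>set Is. is_intv I) \<and> pmod_iso M (intsum Is) \<and> x = topk k Is)"

text \<open>Zigzags M = C_0 <-g_1- C_1 -g_2-> C_2 <-g_3- ... -g_n-> C_n = N (n even):
  odd-indexed arrows point backwards, even-indexed arrows forwards.\<close>

definition zz_src :: "(nat \<Rightarrow> 'a) \<Rightarrow> nat \<Rightarrow> 'a" where
  "zz_src C i = (if odd i then C i else C (i - 1))"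
definition zz_tgt :: "(nat \<Rightarrow> 'a) \<Rightarrow> nat \<Rightarrow> 'a" where
  "zz_tgt C i = (if odd i then C (i - 1) else C i)"

definition dpath :: "(('k::field) pmod \<Rightarrow> ereal) \<Rightarrow> 'k pmod \<Rightarrow> 'k pmod \<Rightarrow> ereal" where
  "dpath \<alpha> M N = Inf {x. \<exists>n C g Q q. even n \<and> C 0 = M \<and> C n = N
       \<and> (\<forall>i\<le>n. fin_enc (C i))
       \<and> (\<forall>i\<in>{1..n}. is_hom (zz_src C i) (zz_tgt C i) (g i)
             \<and> is_coker (zz_src C i) (zz_tgt C i) (g i) (Q i) (q i))
       \<and> x = (\<Sum>i=1..n. \<alpha> (kerm (zz_src C i) (g i)) + \<alpha> (Q i))}"

end

theory Submission
  imports Defs "HOL-Library.Function_Algebras" "HOL-Library.Multiset" "HOL-Analysis.Extended_Real_Limits"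
begin

lemma vzero_eq: "vzero = 0" by (simp add: vzero_def fun_eq_iff)
lemma vadd_eq: "vadd u v = u + v" by (simp add: vadd_def fun_eq_iff)

interpretation VS: vector_space "vscale :: 'k::field \<Rightarrow> (nat \<Rightarrow> 'k) \<Rightarrow> (nat \<Rightarrow> 'k)"
  by unfold_locales (auto simp: vscale_def fun_eq_iff algebra_simps)

interpretation VP: vector_space_pair "vscale :: 'k::field \<Rightarrow> (nat \<Rightarrow> 'k) \<Rightarrow> (nat \<Rightarrow> 'k)" "vscale :: 'k::field \<Rightarrow> (nat \<Rightarrow> 'k) \<Rightarrow> (nat \<Rightarrow> 'k)"
  by unfold_locales

lemma vsubspace_iff: "vsubspace S \<longleftrightarrow> VS.subspace S"
  by (simp add: vsubspace_def VS.subspace_def vzero_eq vadd_eq)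

lemma sum_vec_apply: "(\<Sum>b\<in>B. f b) i = (\<Sum>b\<in>B. (f b) i)" for f :: "'x \<Rightarrow> (nat \<Rightarrow> 'k::field)"
  by (induction B rule: infinite_finite_induct) auto

lemma vspan_eq: "vspan A = VS.span A"
proof -
  have "vspan A = {v. \<exists>B c. finite B \<and> B \<subseteq> A \<and> v = (\<Sum>b\<in>B. vscale (c b) b)}"
    unfolding vspan_def by (simp add: fun_eq_iff sum_vec_apply vscale_def)
  also have "\<dots> = VS.span A" unfolding VS.span_explicit by auto
  finally show ?thesis .
qed

lemma fin_dim_iff: "fin_dim S \<longleftrightarrow> (\<exists>B. finite B \<and> B \<subseteq> S \<and> S = VS.span B)"
  by (simp add: fin_dim_def vspan_eq)

abbreviation "lsub S \<equiv> VS.subspace S"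

lemma lin_onD:
  assumes "lin_on S T f"
  shows "\<And>v. v \<in> S \<Longrightarrow> f v \<in> T" "\<And>u v. u \<in> S \<Longrightarrow> v \<in> S \<Longrightarrow> f (u + v) = f u + f v"
    "\<And>c v. v \<in> S \<Longrightarrow> f (vscale c v) = vscale c (f v)"
  using assms by (auto simp: lin_on_def vadd_eq)

lemma lin_on_iff: "lin_on S T f \<longleftrightarrow> (\<forall>v\<in>S. f v \<in> T) \<and> (\<forall>u\<in>S. \<forall>v\<in>S. f (u + v) = f u + f v)
      \<and> (\<forall>c. \<forall>v\<in>S. f (vscale c v) = vscale c (f v))"
  by (auto simp: lin_on_def vadd_eq)

lemma lin_on_0: assumes "lin_on S T f" "lsub S" shows "f 0 = 0"
proof -
  have "f (vscale 0 0) = vscale 0 (f 0)" using lin_onD(3)[OF assms(1) VS.subspace_0[OF assms(2)]] .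
  then show ?thesis by simp
qed

lemma lin_on_neg: assumes "lin_on S T f" "lsub S" "v \<in> S" shows "f (- v) = - f v"
proof -
  have "f (vscale (-1) v) = vscale (-1) (f v)" using lin_onD(3)[OF assms(1) assms(3)] .
  moreover have "vscale (-1) v = - v" for v :: "(nat \<Rightarrow> 'a)" by (simp add: vscale_def fun_eq_iff)
  ultimately show ?thesis by simp
qed

lemma lin_on_diff: assumes "lin_on S T f" "lsub S" "u \<in> S" "v \<in> S" shows "f (u - v) = f u - f v"
proof -
  have eq: "f (u + - v) = f u + f (- v)" by (rule lin_onD(2)[OF assms(1) assms(3) VS.subspace_neg[OF assms(2) assms(4)]])
  have "u - v = u + - v" by simp
  then show ?thesis using eq lin_on_neg[OF assms(1,2,4)] by simp
qed

lemma lin_on_extend: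
  assumes "lin_on S T f" "lsub S"
  obtains g where "Vector_Spaces.linear vscale vscale g" "\<And>x. x \<in> S \<Longrightarrow> g x = f x"
proof -
  obtain B where B: "B \<subseteq> S" "VS.independent B" "S \<subseteq> VS.span B"
    using VS.maximal_independent_subset[of S] by blast
  have SB: "VS.span B = S" using B assms(2) by (meson VS.span_subspace)
  let ?g = "VP.construct B f"
  have lin: "Vector_Spaces.linear vscale vscale ?g" using VP.linear_construct[OF B(2)] .
  have "x \<in> VS.span B \<Longrightarrow> x \<in> S \<and> ?g x = f x" for x
  proof (induction rule: VS.span_induct_alt)
    case base
    then show ?case using lin_on_0[OF assms] VP.linear_0[OF lin] VS.subspace_0[OF assms(2)] by metis
  next
    case (step c x y)
    have xS: "x \<in> S" using step B by auto
    have yS: "y \<in> S" using step by simp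
    have "?g (vscale c x + y) = vscale c (?g x) + ?g y"
      using VP.linear_add[OF lin] VP.linear_scale[OF lin] by simp
    also have "\<dots> = vscale c (f x) + f y" using step VP.construct_basis[OF B(2)] by simp
    also have "\<dots> = f (vscale c x + y)"
      using lin_onD[OF assms(1)] xS yS VS.subspace_scale[OF assms(2) xS] by simp
    finally show ?case using VS.subspace_add[OF assms(2) VS.subspace_scale[OF assms(2) xS] yS] by (simp add: plus_fun_def)
  qed
  then show ?thesis using that lin SB by auto
qed

lemma dim_bij:
  assumes "lin_on S T f" "lsub S" "lsub T" "bij_betw f S T"
  shows "VS.dim S = VS.dim T"
proof -
  obtain g where g: "Vector_Spaces.linear vscale vscale g" "\<And>x. x \<in> S \<Longrightarrow> g x = f x"
    using lin_on_extend[OF assms(1,2)] by blast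
  obtain B where B: "B \<subseteq> S" "VS.independent B" "S \<subseteq> VS.span B"
    using VS.maximal_independent_subset[of S] by blast
  have SB: "VS.span B = S" using B assms(2) by (meson VS.span_subspace)
  have injf: "inj_on f S" using assms(4) bij_betw_def by blast
  have injg: "inj_on g S" using injf g(2) by (simp add: inj_on_def)
  have gS: "g ` S = T" using g(2) assms(4) by (simp add: bij_betw_def cong: image_cong)
  have ind: "VS.independent (g ` B)"
    using VP.linear_independent_injective_image[OF g(1) B(2)] injg SB by simp
  have sp: "VS.span (g ` B) = T"
    using VP.linear_span_image[OF g(1)] SB gS by simp
  have "VS.dim T = card (g ` B)"
    using VS.dim_eq_card[of "g ` B" T] ind sp VS.span_eq_iff assms(3) by metis
  also have "\<dots> = card B" using card_image inj_on_subset[OF injg B(1)] by blast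
  also have "\<dots> = VS.dim S" using VS.dim_eq_card[of B S] B(2) SB VS.span_eq_iff assms(2) by metis
  finally show ?thesis by simp
qed

lemma fin_dim_sub:
  assumes "lsub S" "S \<subseteq> T" "fin_dim T"
  shows "fin_dim S"
proof -
  obtain C where C: "finite C" "T = VS.span C" using assms(3) fin_dim_iff by blast
  obtain B where B: "B \<subseteq> S" "VS.independent B" "S \<subseteq> VS.span B"
    using VS.maximal_independent_subset[of S] by blast
  have "finite B" using VS.independent_span_bound[OF C(1) B(2)] B(1) assms(2) C(2) by blast
  moreover have "VS.span B = S" using B assms(1) by (meson VS.span_subspace)
  ultimately show ?thesis using B(1) fin_dim_iff by blast
qed

lemma ldim_psubset:
  assumes "lsub S" "lsub T" "S \<subset> T" "fin_dim T"
  shows "VS.dim S < VS.dim T"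
proof -
  obtain C where C: "finite C" "T = VS.span C" using assms(4) fin_dim_iff by blast
  obtain A where A: "A \<subseteq> S" "VS.independent A" "S \<subseteq> VS.span A"
    using VS.maximal_independent_subset[of S] by blast
  obtain B where B: "A \<subseteq> B" "B \<subseteq> T" "VS.independent B" "T \<subseteq> VS.span B"
    using VS.maximal_independent_subset_extend[of A T] A assms(3) by blast
  have fB: "finite B" using VS.independent_span_bound[OF C(1) B(3)] B(2) C(2) by blast
  have SA: "VS.span A = S" using A assms(1) by (meson VS.span_subspace)
  have TB: "VS.span B = T" using B assms(2) by (meson VS.span_subspace)
  have "A \<noteq> B" using SA TB assms(3) by auto
  then have "card A < card B" using B(1) fB by (simp add: psubset_card_mono psubset_eq)
  moreover have "VS.dim S = card A" using VS.dim_eq_card[of A S] A(2) SA VS.span_eq_iff assms(1) by metis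
  moreover have "VS.dim T = card B" using VS.dim_eq_card[of B T] B(3) TB VS.span_eq_iff assms(2) by metis
  ultimately show ?thesis by simp
qed

lemma dim_mono_fin:
  assumes "lsub S" "lsub T" "S \<subseteq> T" "fin_dim T"
  shows "VS.dim S \<le> VS.dim T"
proof (cases "S = T")
  case False
  then have "S \<subset> T" using assms(3) by auto
  then show ?thesis using ldim_psubset[OF assms(1,2) _ assms(4)] by (simp add: less_imp_le)
qed simp

definition coord :: "nat set \<Rightarrow> (nat \<Rightarrow> 'k::field) set" where
  "coord A = {v. \<forall>i. i \<notin> A \<longrightarrow> v i = 0}"

definition delta :: "nat \<Rightarrow> (nat \<Rightarrow> 'k::field)" where
  "delta i = (\<lambda>j. if j = i then 1 else 0)"

lemma coord_sub: "lsub (coord A)"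
  by (auto simp: VS.subspace_def coord_def vscale_def)

lemma dim_coord: assumes "finite A" shows "VS.dim (coord A :: (nat \<Rightarrow> 'k::field) set) = card A"
proof -
  let ?B = "delta ` A :: (nat \<Rightarrow> 'k) set"
  have inj: "inj delta" unfolding inj_def delta_def fun_eq_iff by (metis zero_neq_one)
  have md: "(c::'k) * (if P then 1 else 0) = (if P then c else 0)" for c P by simp
  have sumeq: "(\<Sum>b\<in>A. vscale (c b) (delta b)) = (\<lambda>j. if j \<in> A then c j else (0::'k))" for c
  proof
    fix j
    have "(\<Sum>b\<in>A. vscale (c b) (delta b)) j = (\<Sum>b\<in>A. if j = b then c b else 0)"
      unfolding sum_vec_apply vscale_def delta_def by (rule sum.cong) auto
    also have "\<dots> = (if j \<in> A then c j else 0)" using assms by (simp add: sum.delta')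
    finally show "(\<Sum>b\<in>A. vscale (c b) (delta b)) j = (if j \<in> A then c j else 0)" .
  qed
  have ind: "VS.independent ?B"
  proof (rule VS.independent_if_scalars_zero)
    show "finite ?B" by (rule finite_imageI[OF assms])
    fix f x assume h: "(\<Sum>x\<in>?B. vscale (f x) x) = 0" "x \<in> ?B"
    then obtain a where a: "a \<in> A" "x = delta a" by blast
    have "(\<Sum>x\<in>?B. vscale (f x) x) = (\<Sum>b\<in>A. ((\<lambda>x. vscale (f x) x) \<circ> delta) b)"
      by (rule sum.reindex[OF inj_on_subset[OF inj subset_UNIV]])
    then have "(\<Sum>x\<in>?B. vscale (f x) x) = (\<Sum>b\<in>A. vscale (f (delta b)) (delta b))"
      by (simp only: o_def)
    then have e: "(\<lambda>j. if j \<in> A then f (delta j) else (0::'k)) = 0" using h(1) sumeq[of "\<lambda>b. f (delta b)"] by simp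
    have "(if a \<in> A then f (delta a) else (0::'k)) = 0" using fun_cong[OF e, of a] by simp
    then show "f x = 0" using a by simp
  qed
  have spB: "VS.span ?B = coord A"
  proof
    show "VS.span ?B \<subseteq> coord A"
      by (rule VS.span_minimal[OF _ coord_sub]) (auto simp: coord_def delta_def)
    show "coord A \<subseteq> VS.span ?B"
    proof
      fix v :: "(nat \<Rightarrow> 'k)" assume "v \<in> coord A"
      then have "(\<lambda>j. if j \<in> A then v j else 0) = v" by (auto simp: coord_def fun_eq_iff)
      then have "v = (\<Sum>b\<in>A. vscale (v b) (delta b))" using sumeq[of v] by simp
      also have "\<dots> \<in> VS.span ?B" by (intro VS.span_sum VS.span_scale VS.span_base) auto
      finally show "v \<in> VS.span ?B" .
    qed
  qed
  have sc: "VS.span (coord A :: (nat \<Rightarrow> 'k) set) = coord A" by (rule VS.span_eq_iff[THEN iffD2, OF coord_sub])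
  have "VS.dim (coord A :: (nat \<Rightarrow> 'k) set) = card ?B" apply (rule VS.dim_eq_card) apply (simp only: spB sc) by (rule ind)
  also have "card ?B = card A" by (rule card_image[OF inj_on_subset[OF inj subset_UNIV]])
  finally show ?thesis .
qed

lemma intv_side:
  assumes "is_intv I" "x \<notin> I"
  shows "(\<forall>y\<in>I. x < y) \<or> (\<forall>y\<in>I. y < x)"
proof (rule ccontr)
  assume "\<not> ?thesis"
  then obtain y1 y2 where "y1 \<in> I" "y2 \<in> I" "\<not> x < y1" "\<not> y2 < x" by blast
  then have "y1 \<le> x" "x \<le> y2" by auto
  then show False using assms \<open>y1 \<in> I\<close> \<open>y2 \<in> I\<close> unfolding is_intv_def by blast
qed

lemma separate:
  assumes "finite F" "J \<in> F" "\<forall>I\<in>F. is_intv I" "\<forall>I\<in>F. J \<subseteq> I \<longrightarrow> I = J"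
  shows "\<exists>s t. s \<le> t \<and> s \<in> J \<and> t \<in> J \<and> (\<forall>I\<in>F. I \<noteq> J \<longrightarrow> \<not> (s \<in> I \<and> t \<in> I))"
proof -
  have "\<forall>I\<in>F - {J}. \<exists>x. x \<in> J \<and> x \<notin> I" using assms(4) by blast
  from bchoice[OF this] obtain x where x: "\<forall>I\<in>F - {J}. x I \<in> J \<and> x I \<notin> I" by blast
  obtain j0 where j0: "j0 \<in> J" using assms(2,3) unfolding is_intv_def by blast
  define W where "W = insert j0 (x ` (F - {J}))"
  have fW: "finite W" unfolding W_def using assms(1) by blast
  have nW: "W \<noteq> {}" unfolding W_def by blast
  have WJ: "W \<subseteq> J" using x j0 unfolding W_def by blast
  define s where "s = Min W"
  define t where "t = Max W"
  have sW: "s \<in> W" "t \<in> W" unfolding s_def t_def using fW nW by (rule Min_in, rule Max_in)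
  have st: "s \<le> t" unfolding s_def using Min_le[OF fW sW(2)] .
  have "\<not> (s \<in> I \<and> t \<in> I)" if I: "I \<in> F" "I \<noteq> J" for I
  proof -
    have xI: "x I \<in> W" "x I \<notin> I" using x I unfolding W_def by blast+
    have le: "s \<le> x I" "x I \<le> t" unfolding s_def t_def using fW xI(1) by (rule Min_le, rule Max_ge)
    have "is_intv I" using assms(3) I by blast
    from intv_side[OF this xI(2)] show ?thesis using le by force
  qed
  then show ?thesis using st sW WJ by blast
qed

lemma mset_eq_from_counts:
  assumes "\<forall>I\<in>#MA. is_intv I" "\<forall>I\<in>#MB. is_intv I"
    "\<And>s t. s \<le> t \<Longrightarrow> size (filter_mset (\<lambda>I. s\<in>I \<and> t\<in>I) MA) = size (filter_mset (\<lambda>I. s\<in>I \<and> t\<in>I) MB)"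
  shows "MA = MB"
  using assms
proof (induction "size MA + size MB" arbitrary: MA MB rule: less_induct)
  case less
  show ?case
  proof (cases "MA + MB = {#}")
    case True then show ?thesis by simp
  next
    case False
    let ?F = "set_mset (MA + MB)"
    have fF: "finite ?F" "?F \<noteq> {}" using False by auto
    obtain J where J: "J \<in> ?F" "\<forall>I\<in>?F. J \<le> I \<longrightarrow> J = I"
      using finite_has_maximal[OF fF] by blast
    have iv: "\<forall>I\<in>?F. is_intv I" using less.prems by auto
    have J2: "\<forall>I\<in>?F. J \<subseteq> I \<longrightarrow> I = J" using J(2) by auto
    obtain s t where st: "s \<le> t" "s \<in> J" "t \<in> J" "\<forall>I\<in>?F. I \<noteq> J \<longrightarrow> \<not> (s \<in> I \<and> t \<in> I)"
      using separate[OF fF(1) J(1) iv J2] by blast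
    have filt: "filter_mset (\<lambda>I. s\<in>I \<and> t\<in>I) M = filter_mset (\<lambda>I. I = J) M" if "set_mset M \<subseteq> ?F" for M
      using that st by (intro filter_mset_cong) auto
    have "count MA J = count MB J"
      using less.prems(3)[OF st(1)] filt[of MA] filt[of MB] by (simp add: filter_eq_replicate_mset)
    moreover have "count MA J + count MB J > 0" using J(1) by simp
    ultimately have "count MA J > 0" "count MB J > 0" by auto
    then have inA: "J \<in># MA" and inB: "J \<in># MB" by auto
    define MA' where "MA' = MA - {#J#}"
    define MB' where "MB' = MB - {#J#}"
    have MA: "MA = add_mset J MA'" using inA by (simp add: MA'_def)
    have MB: "MB = add_mset J MB'" using inB by (simp add: MB'_def)
    have "MA' = MB'"
    proof (rule less.hyps)
      show "size MA' + size MB' < size MA + size MB" using MA MB by simp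
      show "\<forall>I\<in>#MA'. is_intv I" "\<forall>I\<in>#MB'. is_intv I" using less.prems MA MB by auto
      fix s' t' :: real assume "s' \<le> t'"
      then show "size (filter_mset (\<lambda>I. s'\<in>I \<and> t'\<in>I) MA') = size (filter_mset (\<lambda>I. s'\<in>I \<and> t'\<in>I) MB')"
        using less.prems(3)[of s' t'] unfolding MA MB by (simp split: if_splits)
    qed
    then show ?thesis using MA MB by simp
  qed
qed

lemma sp_intsum: "sp (intsum Is) t = coord {i. i < length Is \<and> t \<in> Is ! i}"
  unfolding intsum_def coord_def by (simp, rule Collect_cong) (meson not_le)

lemma mp_intsum: "mp (intsum Is) s t v = (\<lambda>i. if i < length Is \<and> t \<in> Is ! i then v i else 0)"
  by (simp add: intsum_def)

lemma rank_intsum: "mp (intsum Is) s t ` sp (intsum Is) s = (coord {i. i < length Is \<and> s \<in> Is ! i \<and> t \<in> Is ! i} :: (nat \<Rightarrow> 'k::field) set)"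
  (is "?L = ?R")
proof
  show "?L \<subseteq> ?R"
    by (auto simp: sp_intsum mp_intsum coord_def)
  show "?R \<subseteq> ?L"
  proof
    fix v :: "(nat \<Rightarrow> 'k)" assume v: "v \<in> coord {i. i < length Is \<and> s \<in> Is ! i \<and> t \<in> Is ! i}"
    then have "v \<in> sp (intsum Is) s" by (auto simp: sp_intsum coord_def)
    moreover have "mp (intsum Is) s t v = v" using v by (auto simp: mp_intsum coord_def fun_eq_iff)
    ultimately show "v \<in> mp (intsum Is) s t ` sp (intsum Is) s" by force
  qed
qed

lemma lsub_image:
  assumes "lin_on S T f" "lsub S"
  shows "lsub (f ` S)"
  unfolding VS.subspace_def
proof (intro conjI ballI allI)
  show "0 \<in> f ` S" using lin_on_0[OF assms] VS.subspace_0[OF assms(2)] by force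
  fix x y assume "x \<in> f ` S" "y \<in> f ` S"
  then obtain a b where "a \<in> S" "b \<in> S" "x = f a" "y = f b" by blast
  then show "x + y \<in> f ` S" using lin_onD(2)[OF assms(1)] VS.subspace_add[OF assms(2)] by (metis image_eqI)
next
  fix c x assume "x \<in> f ` S"
  then obtain a where "a \<in> S" "x = f a" by blast
  then show "vscale c x \<in> f ` S" using lin_onD(3)[OF assms(1)] VS.subspace_scale[OF assms(2)] by (metis image_eqI)
qed

lemma pmod_sub: "is_pmod X \<Longrightarrow> lsub (sp X t)"
  by (simp add: is_pmod_def vsubspace_iff)

lemma pmod_lin: "is_pmod X \<Longrightarrow> s \<le> t \<Longrightarrow> lin_on (sp X s) (sp X t) (mp X s t)"
  by (simp add: is_pmod_def)

lemma pmod_id: "is_pmod X \<Longrightarrow> v \<in> sp X t \<Longrightarrow> mp X t t v = v"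
  by (simp add: is_pmod_def)

lemma pmod_comp: "is_pmod X \<Longrightarrow> r \<le> s \<Longrightarrow> s \<le> t \<Longrightarrow> v \<in> sp X r \<Longrightarrow> mp X s t (mp X r s v) = mp X r t v"
  by (simp add: is_pmod_def)

lemma hom_lin: "is_hom X Y f \<Longrightarrow> lin_on (sp X t) (sp Y t) (f t)"
  by (simp add: is_hom_def)

lemma hom_comm: "is_hom X Y f \<Longrightarrow> s \<le> t \<Longrightarrow> v \<in> sp X s \<Longrightarrow> f t (mp X s t v) = mp Y s t (f s v)"
  by (simp add: is_hom_def)

lemma iso_rank:
  fixes X Y :: "'k::field pmod"
  assumes X: "is_pmod X" and f: "is_hom X Y f" "\<And>t. bij_betw (f t) (sp X t) (sp Y t)" and st: "s \<le> t"
    and sub: "lsub (mp Y s t ` sp Y s)"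
  shows "VS.dim (mp X s t ` sp X s) = VS.dim (mp Y s t ` sp Y s)"
proof (rule dim_bij)
  let ?A = "mp X s t ` sp X s" and ?B = "mp Y s t ` sp Y s"
  have AX: "?A \<subseteq> sp X t" using lin_onD(1)[OF pmod_lin[OF X st]] by (simp add: image_subset_iff)
  show "lsub ?A" by (rule lsub_image[OF pmod_lin[OF X st] pmod_sub[OF X]])
  show "lsub ?B" by (rule sub)
  have img: "f t ` ?A = ?B"
  proof -
    have "f t ` ?A = mp Y s t ` f s ` sp X s" unfolding image_image by (rule image_cong[OF refl]) (rule hom_comm[OF f(1) st])
    also have "f s ` sp X s = sp Y s" using f(2)[of s] by (simp add: bij_betw_def)
    finally show ?thesis .
  qed
  show "lin_on ?A ?B (f t)"
    unfolding lin_on_iff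
  proof (intro conjI ballI allI)
    fix v assume v: "v \<in> ?A"
    show "f t v \<in> ?B" using img v by (metis imageI)
  next
    fix u v assume "u \<in> ?A" "v \<in> ?A"
    then show "f t (u + v) = f t u + f t v" using lin_onD(2)[OF hom_lin[OF f(1)]] AX by blast
  next
    fix c v assume "v \<in> ?A"
    then show "f t (vscale c v) = vscale c (f t v)" using lin_onD(3)[OF hom_lin[OF f(1)]] AX by blast
  qed
  show "bij_betw (f t) ?A ?B"
  proof -
    have "inj_on (f t) (sp X t)" using f(2)[of t] by (simp add: bij_betw_def)
    from inj_on_subset[OF this AX] img show ?thesis by (simp add: bij_betw_def)
  qed
qed

lemma count_list_filter:
  "size (filter_mset P (mset Is)) = card {i. i < length Is \<and> P (Is ! i)}"
  by (metis mset_filter size_mset length_filter_conv_card)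

lemma rank_iso_intsum:
  fixes X :: "'k::field pmod"
  assumes X: "is_pmod X" and iso: "pmod_iso X (intsum Is)" and st: "s \<le> t"
  shows "VS.dim (mp X s t ` sp X s) = size (filter_mset (\<lambda>I. s \<in> I \<and> t \<in> I) (mset Is))"
proof -
  obtain f where f: "is_hom X (intsum Is) f" "\<And>t. bij_betw (f t) (sp X t) (sp (intsum Is :: 'k pmod) t)"
    using iso unfolding pmod_iso_def by blast
  have "VS.dim (mp X s t ` sp X s) = VS.dim (mp (intsum Is) s t ` sp (intsum Is :: 'k pmod) s)"
    by (rule iso_rank[OF X f st]) (simp add: rank_intsum coord_sub)
  also have "\<dots> = card {i. i < length Is \<and> s \<in> Is ! i \<and> t \<in> Is ! i}"
    unfolding rank_intsum by (rule dim_coord) simp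
  finally show ?thesis by (simp add: count_list_filter)
qed

lemma decomp_unique:
  fixes X :: "'k::field pmod"
  assumes X: "is_pmod X" and "pmod_iso X (intsum Is)" "pmod_iso X (intsum Js)"
    "\<forall>I\<in>set Is. is_intv I" "\<forall>I\<in>set Js. is_intv I"
  shows "mset Is = mset Js"
proof (rule mset_eq_from_counts)
  show "\<forall>I\<in>#mset Is. is_intv I" "\<forall>I\<in>#mset Js. is_intv I" using assms(4,5) by auto
  fix s t :: real assume "s \<le> t"
  then show "size (filter_mset (\<lambda>I. s\<in>I \<and> t\<in>I) (mset Is)) = size (filter_mset (\<lambda>I. s\<in>I \<and> t\<in>I) (mset Js))"
    using rank_iso_intsum[OF X assms(2)] rank_iso_intsum[OF X assms(3)] by metis
qed

lemma topk_mset: "mset Is = mset Js \<Longrightarrow> topk k Is = topk k Js"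
proof -
  assume "mset Is = mset Js"
  then have "mset (map ilen Is) = mset (map ilen Js)" by (metis mset_map)
  then have "sort (map ilen Is) = sort (map ilen Js)"
    by (metis properties_for_sort mset_sort sorted_sort)
  then show ?thesis by (simp add: topk_def)
qed

lemma Tk_eq:
  fixes X :: "'k::field pmod"
  assumes X: "is_pmod X" and Is: "\<forall>I\<in>set Is. is_intv I" "pmod_iso X (intsum Is)"
  shows "Tk k X = topk k Is"
  unfolding Tk_def
proof (rule the_equality)
  show "\<exists>Js. (\<forall>I\<in>set Js. is_intv I) \<and> pmod_iso X (intsum Js) \<and> topk k Is = topk k Js"
    using Is by blast
  fix x assume "\<exists>Js. (\<forall>I\<in>set Js. is_intv I) \<and> pmod_iso X (intsum Js) \<and> x = topk k Js"
  then obtain Js where "\<forall>I\<in>set Js. is_intv I" "pmod_iso X (intsum Js)" "x = topk k Js" by blast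
  then show "x = topk k Is" using decomp_unique[OF X] Is topk_mset by metis
qed

lemma avg_real:
  fixes g :: "nat \<Rightarrow> real"
  assumes nn: "\<And>i. 0 \<le> g i" and mono: "\<And>i j. i \<le> j \<Longrightarrow> g j \<le> g i" and k: "1 \<le> k" "k \<le> l"
  shows "real k * (\<Sum>i<l. g i) \<le> real l * (\<Sum>i<k. g i)"
  using k(2)
proof (induction l rule: dec_induct)
  case base
  then show ?case by simp
next
  case (step m)
  have "real k * g m = (\<Sum>i<k. g m)" by simp
  also have "\<dots> \<le> (\<Sum>i<k. g i)" by (intro sum_mono mono) (use step.hyps(1) in auto)
  finally have "real k * g m \<le> (\<Sum>i<k. g i)" .
  then have "real k * (\<Sum>i<Suc m. g i) \<le> real m * (\<Sum>i<k. g i) + (\<Sum>i<k. g i)"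
    using step.IH by (simp add: algebra_simps)
  then show ?case by (simp add: algebra_simps)
qed

lemma avg_ereal:
  fixes f :: "nat \<Rightarrow> ereal"
  assumes nn: "\<And>i. 0 \<le> f i" and mono: "\<And>i j. i \<le> j \<Longrightarrow> f j \<le> f i" and k: "1 \<le> k" "1 \<le> l"
  shows "(\<Sum>i<l. f i) \<le> ereal (max 1 (real l / real k)) * (\<Sum>i<k. f i)"
proof -
  let ?c = "max 1 (real l / real k)"
  have c1: "1 \<le> ?c" by simp
  have Sk0: "0 \<le> (\<Sum>i<k. f i)" by (intro sum_nonneg nn)
  have cS: "x \<le> ereal ?c * x" if "0 \<le> x" for x :: ereal
  proof -
    have e1: "(1::ereal) \<le> ereal ?c" using c1 by (simp only: one_ereal_def ereal_less_eq)
    have "1 * x \<le> ereal ?c * x" by (rule ereal_mult_right_mono[OF e1 that])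
    then show ?thesis by simp
  qed
  show ?thesis
  proof (cases "l \<le> k")
    case True
    have "(\<Sum>i<l. f i) \<le> (\<Sum>i<k. f i)" using True by (intro sum_mono2) (auto intro: nn)
    also have "\<dots> \<le> ereal ?c * (\<Sum>i<k. f i)" by (rule cS[OF Sk0])
    finally show ?thesis .
  next
    case False
    show ?thesis
    proof (cases "(\<Sum>i<k. f i) = \<infinity>")
      case True
      have gen: "ereal c * \<infinity> = \<infinity>" if "0 < c" for c :: real using that by simp
      have "ereal ?c * \<infinity> = \<infinity>" by (rule gen) (use c1 in linarith)
      then show ?thesis using True by simp
    next
      case fin: False
      have "sum f {0} \<le> (\<Sum>i<k. f i)"
        by (rule sum_mono2) (use k(1) nn in auto)
      then have "f 0 \<le> (\<Sum>i<k. f i)" by simp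
      then have "f 0 \<noteq> \<infinity>" using fin by (auto simp: top_unique[symmetric])
      then have f0: "f 0 < \<infinity>" by (simp add: less_top)
      define g where "g i = real_of_ereal (f i)" for i
      have fg: "f i = ereal (g i)" for i
      proof -
        have "f i \<le> f 0" using mono by simp
        then have "\<bar>f i\<bar> \<noteq> \<infinity>" using nn[of i] f0 by auto
        then show ?thesis unfolding g_def by (rule ereal_real'[symmetric])
      qed
      have gnn: "0 \<le> g i" for i using nn[of i] fg[of i] by simp
      have gmono: "i \<le> j \<Longrightarrow> g j \<le> g i" for i j using mono[of i j] fg[of i] fg[of j] by simp
      have r: "real k * (\<Sum>i<l. g i) \<le> real l * (\<Sum>i<k. g i)"
        using avg_real[OF gnn gmono k(1)] False by simp
      have "(\<Sum>i<l. g i) \<le> (real l / real k) * (\<Sum>i<k. g i)"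
        using r k(1) by (simp add: field_simps)
      also have "\<dots> \<le> ?c * (\<Sum>i<k. g i)"
        by (intro mult_right_mono) (auto intro: sum_nonneg gnn)
      finally have "(\<Sum>i<l. g i) \<le> ?c * (\<Sum>i<k. g i)" .
      moreover have "(\<Sum>i<l. f i) = ereal (\<Sum>i<l. g i)" "(\<Sum>i<k. f i) = ereal (\<Sum>i<k. g i)"
        by (simp_all only: fg sum_ereal)
      ultimately show ?thesis by (simp only: times_ereal.simps(1) ereal_less_eq(3))
    qed
  qed
qed

lemma ilen_nonneg: assumes "is_intv I" shows "0 \<le> ilen I"
proof -
  obtain x where x: "x \<in> I" using assms by (auto simp: is_intv_def)
  have "(INF y\<in>I. ereal y) \<le> ereal x" using x by (rule INF_lower)
  also have "\<dots> \<le> (SUP y\<in>I. ereal y)" using x by (rule SUP_upper)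
  finally have le: "(INF y\<in>I. ereal y) \<le> (SUP y\<in>I. ereal y)" .
  then show ?thesis unfolding ilen_def by (rule ereal_diff_positive)
qed

lemma topk_sum:
  fixes xs :: "ereal list"
  shows "sum_list (take l xs) = (\<Sum>i<l. if i < length xs then xs ! i else 0)"
proof -
  have "sum_list (take l xs) = (\<Sum>i<length (take l xs). take l xs ! i)" by (simp add: sum_list_sum_nth atLeast0LessThan)
  also have "\<dots> = (\<Sum>i<min l (length xs). xs ! i)" by (intro sum.cong) auto
  also have "\<dots> = (\<Sum>i<l. if i < length xs then xs ! i else 0)"
    by (rule sum.mono_neutral_cong_left) auto
  finally show ?thesis .
qed

lemma topk_ineq:
  assumes "1 \<le> k" "1 \<le> l" "\<forall>I\<in>set Is. is_intv I"
  shows "topk l Is \<le> ereal (max 1 (real l / real k)) * topk k Is"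
proof -
  define xs where "xs = rev (sort (map ilen Is))"
  define f where "f i = (if i < length xs then xs ! i else 0)" for i
  have nn0: "\<forall>x\<in>set xs. 0 \<le> x" using assms(3) ilen_nonneg by (auto simp: xs_def)
  have nn: "0 \<le> f i" for i using nn0 by (auto simp: f_def)
  have sw: "sorted_wrt (\<lambda>x y. y \<le> x) xs" unfolding xs_def sorted_wrt_rev
    using sorted_sort[of "map ilen Is"] by simp
  have mono: "f j \<le> f i" if "i \<le> j" for i j
  proof (cases "j < length xs")
    case True
    then show ?thesis using that sw nn0
      by (cases "i = j") (auto simp: f_def sorted_wrt_iff_nth_less)
  next
    case False
    then show ?thesis using nn by (simp add: f_def)
  qed
  have "topk l Is = (\<Sum>i<l. f i)" "topk k Is = (\<Sum>i<k. f i)"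
    unfolding topk_def xs_def[symmetric] f_def by (rule topk_sum)+
  then show ?thesis using avg_ereal[OF nn mono assms(1,2)] by simp
qed

definition good_ker :: "('k::field) pmod \<Rightarrow> bool" where
  "good_ker X \<longleftrightarrow> (\<exists>A B g. fin_enc A \<and> fin_enc B \<and> is_hom A B g \<and> X = kerm A g)"

definition good_cok :: "('k::field) pmod \<Rightarrow> bool" where
  "good_cok X \<longleftrightarrow> (\<exists>A B g q. fin_enc A \<and> fin_enc B \<and> is_hom A B g \<and> is_coker A B g X q)"

lemma dpath_mono:
  fixes \<alpha> \<beta> :: "('k::field) pmod \<Rightarrow> ereal"
  assumes c: "0 < c"
    and H: "\<And>X. good_ker X \<or> good_cok X \<Longrightarrow> \<alpha> X \<le> ereal c * \<beta> X \<and> 0 \<le> \<beta> X"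
  shows "dpath \<alpha> M N \<le> ereal c * dpath \<beta> M N"
proof -
  define P where "P x \<longleftrightarrow> (\<exists>n C g Q q. even n \<and> C 0 = M \<and> C n = N
       \<and> (\<forall>i\<le>n. fin_enc (C i))
       \<and> (\<forall>i\<in>{1..n}. is_hom (zz_src C i) (zz_tgt C i) (g i)
             \<and> is_coker (zz_src C i) (zz_tgt C i) (g i) (Q i) (q i))
       \<and> x = (\<Sum>i=1..n. \<beta> (kerm (zz_src C i) (g i)) + \<beta> (Q i)))" for x
  have "ereal c * dpath \<beta> M N = ereal c * Inf {x. P x}" unfolding dpath_def P_def by simp
  also have "\<dots> = Inf {ereal c * x |x. P x}" by (rule ereal_Inf_cmult[OF c, symmetric])
  finally have eq: "ereal c * dpath \<beta> M N = Inf {ereal c * x |x. P x}" .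
  have "dpath \<alpha> M N \<le> Inf {ereal c * x |x. P x}"
    unfolding dpath_def
  proof (rule Inf_mono)
    fix y assume "y \<in> {ereal c * x |x. P x}"
    then obtain n C g Q q where z: "even n" "C 0 = M" "C n = N" "\<forall>i\<le>n. fin_enc (C i)"
       "\<forall>i\<in>{1..n}. is_hom (zz_src C i) (zz_tgt C i) (g i)
             \<and> is_coker (zz_src C i) (zz_tgt C i) (g i) (Q i) (q i)"
       and y: "y = ereal c * (\<Sum>i=1..n. \<beta> (kerm (zz_src C i) (g i)) + \<beta> (Q i))"
      unfolding P_def by blast
    have fe: "fin_enc (zz_src C i) \<and> fin_enc (zz_tgt C i)" if "i \<in> {1..n}" for i
      using that z(4) by (auto simp: zz_src_def zz_tgt_def)
    have gk: "good_ker (kerm (zz_src C i) (g i))" if "i \<in> {1..n}" for i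
      unfolding good_ker_def using fe[OF that] z(5) that by blast
    have gc: "good_cok (Q i)" if "i \<in> {1..n}" for i
      unfolding good_cok_def using fe[OF that] z(5) that by blast
    let ?x = "\<Sum>i=1..n. \<alpha> (kerm (zz_src C i) (g i)) + \<alpha> (Q i)"
    have "?x \<le> (\<Sum>i=1..n. ereal c * \<beta> (kerm (zz_src C i) (g i)) + ereal c * \<beta> (Q i))"
      by (intro sum_mono add_mono) (use H gk gc in blast)+
    also have "\<dots> = (\<Sum>i=1..n. ereal c * (\<beta> (kerm (zz_src C i) (g i)) + \<beta> (Q i)))"
      by (intro sum.cong refl ereal_right_distrib[symmetric]) (use H gk gc in blast)+
    also have "\<dots> = y" unfolding y
      by (rule sum_ereal_right_distrib[symmetric]) (use H gk gc in \<open>blast intro: add_nonneg_nonneg\<close>)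
    finally have "?x \<le> y" .
    moreover have "?x \<in> {x. \<exists>n C g Q q. even n \<and> C 0 = M \<and> C n = N
       \<and> (\<forall>i\<le>n. fin_enc (C i))
       \<and> (\<forall>i\<in>{1..n}. is_hom (zz_src C i) (zz_tgt C i) (g i)
             \<and> is_coker (zz_src C i) (zz_tgt C i) (g i) (Q i) (q i))
       \<and> x = (\<Sum>i=1..n. \<alpha> (kerm (zz_src C i) (g i)) + \<alpha> (Q i))}"
      using z by blast
    ultimately show "\<exists>x\<in>{x. \<exists>n C g Q q. even n \<and> C 0 = M \<and> C n = N
       \<and> (\<forall>i\<le>n. fin_enc (C i))
       \<and> (\<forall>i\<in>{1..n}. is_hom (zz_src C i) (zz_tgt C i) (g i)
             \<and> is_coker (zz_src C i) (zz_tgt C i) (g i) (Q i) (q i))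
       \<and> x = (\<Sum>i=1..n. \<alpha> (kerm (zz_src C i) (g i)) + \<alpha> (Q i))}. x \<le> y" by blast
  qed
  then show ?thesis using eq by simp
qed

definition enc :: "('k::field) pmod \<Rightarrow> (real \<Rightarrow> nat) \<Rightarrow> bool" where
  "enc X \<pi> \<longleftrightarrow> mono \<pi> \<and> finite (range \<pi>) \<and> (\<forall>s t. s \<le> t \<and> \<pi> s = \<pi> t \<longrightarrow> bij_betw (mp X s t) (sp X s) (sp X t))"

lemma fin_enc_iff: "fin_enc X \<longleftrightarrow> is_pmod X \<and> (\<forall>t. fin_dim (sp X t)) \<and> (\<exists>\<pi>. enc X \<pi>)"
  by (simp add: fin_enc_def enc_def)

lemma enc_bij: "enc X \<pi> \<Longrightarrow> s \<le> t \<Longrightarrow> \<pi> s = \<pi> t \<Longrightarrow> bij_betw (mp X s t) (sp X s) (sp X t)"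
  by (simp add: enc_def)

lemma enc_sum:
  assumes "enc X \<pi>1" "enc Y \<pi>2"
  shows "mono (\<lambda>t. \<pi>1 t + \<pi>2 t)" "finite (range (\<lambda>t. \<pi>1 t + \<pi>2 t))"
    "\<And>s t. s \<le> t \<Longrightarrow> \<pi>1 s + \<pi>2 s = \<pi>1 t + \<pi>2 t \<Longrightarrow> \<pi>1 s = \<pi>1 t \<and> \<pi>2 s = \<pi>2 t"
proof -
  have m: "mono \<pi>1" "mono \<pi>2" using assms by (auto simp: enc_def)
  show "mono (\<lambda>t. \<pi>1 t + \<pi>2 t)" using m by (auto simp: mono_def intro: add_mono)
  have "range (\<lambda>t. \<pi>1 t + \<pi>2 t) \<subseteq> (\<lambda>(a,b). a + b) ` (range \<pi>1 \<times> range \<pi>2)" by auto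
  moreover have "finite ((\<lambda>(a,b). a + b) ` (range \<pi>1 \<times> range \<pi>2))" using assms by (auto simp: enc_def)
  ultimately show "finite (range (\<lambda>t. \<pi>1 t + \<pi>2 t))" by (rule finite_subset)
  fix s t :: real assume "s \<le> t" "\<pi>1 s + \<pi>2 s = \<pi>1 t + \<pi>2 t"
  moreover have "\<pi>1 s \<le> \<pi>1 t" "\<pi>2 s \<le> \<pi>2 t" using m \<open>s \<le> t\<close> by (auto simp: mono_def)
  ultimately show "\<pi>1 s = \<pi>1 t \<and> \<pi>2 s = \<pi>2 t" by linarith
qed

lemma hom_0: "is_hom X Y f \<Longrightarrow> is_pmod X \<Longrightarrow> f t 0 = 0"
  using lin_on_0[OF hom_lin pmod_sub] by blast

lemma mp_0: "is_pmod X \<Longrightarrow> s \<le> t \<Longrightarrow> mp X s t 0 = 0"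
  using lin_on_0[OF pmod_lin pmod_sub] by blast

lemma kerm_fin_enc:
  fixes A B :: "('k::field) pmod"
  assumes A: "fin_enc A" and B: "fin_enc B" and g: "is_hom A B g"
  shows "fin_enc (kerm A g)"
proof -
  have pA: "is_pmod A" and pB: "is_pmod B" using A B by (auto simp: fin_enc_iff)
  obtain \<pi>1 \<pi>2 where e1: "enc A \<pi>1" and e2: "enc B \<pi>2" using A B by (auto simp: fin_enc_iff)
  let ?K = "kerm A g"
  have spK: "sp ?K t = {v \<in> sp A t. g t v = 0}" for t by (simp add: kerm_def vzero_eq)
  have mpK: "mp ?K = mp A" by (simp add: kerm_def)
  have subK: "lsub (sp ?K t)" for t
    unfolding spK VS.subspace_def
    using VS.subspace_0[OF pmod_sub[OF pA]] VS.subspace_add[OF pmod_sub[OF pA]] VS.subspace_scale[OF pmod_sub[OF pA]]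
      hom_0[OF g pA] lin_onD[OF hom_lin[OF g]] by (auto simp: vscale_def)
  have mapK: "mp A s t v \<in> sp ?K t" if "s \<le> t" "v \<in> sp ?K s" for s t v
  proof -
    have v: "v \<in> sp A s" "g s v = 0" using that spK by auto
    have "g t (mp A s t v) = mp B s t (g s v)" by (rule hom_comm[OF g that(1) v(1)])
    also have "\<dots> = 0" using v mp_0[OF pB that(1)] by simp
    finally show ?thesis using spK lin_onD(1)[OF pmod_lin[OF pA that(1)] v(1)] by simp
  qed
  have pK: "is_pmod ?K"
    unfolding is_pmod_def
  proof (intro conjI allI impI ballI)
    show "vsubspace (sp ?K t)" for t using subK vsubspace_iff by blast
    fix s t :: real assume st: "s \<le> t"
    show "lin_on (sp ?K s) (sp ?K t) (mp ?K s t)"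
      using pmod_lin[OF pA st] mapK[OF st] spK unfolding lin_on_def mpK by auto
  next
    fix t v assume "v \<in> sp ?K t" then show "mp ?K t t v = v" using pmod_id[OF pA] spK mpK by auto
  next
    fix r s t v assume "r \<le> s" "s \<le> t" "v \<in> sp ?K r"
    then show "mp ?K s t (mp ?K r s v) = mp ?K r t v" using pmod_comp[OF pA] spK mpK by auto
  qed
  have fdK: "fin_dim (sp ?K t)" for t
  proof (rule fin_dim_sub[OF subK])
    show "sp ?K t \<subseteq> sp A t" using spK by auto
    show "fin_dim (sp A t)" using A by (simp add: fin_enc_iff)
  qed
  let ?\<pi> = "\<lambda>t. \<pi>1 t + \<pi>2 t"
  have "enc ?K ?\<pi>"
    unfolding enc_def
  proof (intro conjI allI impI)
    show "mono ?\<pi>" "finite (range ?\<pi>)" using enc_sum[OF e1 e2] by auto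
    fix s t assume h: "s \<le> t \<and> ?\<pi> s = ?\<pi> t"
    then have eq: "\<pi>1 s = \<pi>1 t" "\<pi>2 s = \<pi>2 t" using enc_sum(3)[OF e1 e2] by blast+
    have bA: "bij_betw (mp A s t) (sp A s) (sp A t)" using enc_bij[OF e1] h eq by blast
    have bB: "bij_betw (mp B s t) (sp B s) (sp B t)" using enc_bij[OF e2] h eq by blast
    show "bij_betw (mp ?K s t) (sp ?K s) (sp ?K t)"
      unfolding bij_betw_def
    proof
      show "inj_on (mp ?K s t) (sp ?K s)" using bA spK mpK by (auto simp: bij_betw_def inj_on_def)
      show "mp ?K s t ` sp ?K s = sp ?K t"
      proof
        show "mp ?K s t ` sp ?K s \<subseteq> sp ?K t" using mapK h mpK by auto
        show "sp ?K t \<subseteq> mp ?K s t ` sp ?K s"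
        proof
          fix y assume y: "y \<in> sp ?K t"
          then have "y \<in> sp A t" using spK by auto
          then obtain x where x: "x \<in> sp A s" "y = mp A s t x" using bA by (auto simp: bij_betw_def)
          have gx: "g s x \<in> sp B s" using lin_onD(1)[OF hom_lin[OF g] x(1)] .
          have "mp B s t (g s x) = g t y" using hom_comm[OF g _ x(1)] h x(2) by simp
          also have "\<dots> = 0" using y spK by simp
          also have "\<dots> = mp B s t 0" using mp_0[OF pB] h by simp
          finally have "g s x = 0"
            using bB gx VS.subspace_0[OF pmod_sub[OF pB]] by (auto simp: bij_betw_def inj_on_def)
          then show "y \<in> mp ?K s t ` sp ?K s" using x spK mpK by auto
        qed
      qed
    qed
  qed
  then show ?thesis using pK fdK by (auto simp: fin_enc_iff)
qed


lemma fin_dim_image: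
  assumes "lin_on S T f" "lsub S" "fin_dim S"
  shows "fin_dim (f ` S)"
proof -
  obtain C where C: "finite C" "C \<subseteq> S" "S = VS.span C" using assms(3) unfolding fin_dim_iff by blast
  obtain h where h: "Vector_Spaces.linear vscale vscale h" "\<And>x. x \<in> S \<Longrightarrow> h x = f x"
    using lin_on_extend[OF assms(1,2)] by blast
  have hS: "h ` S = f ` S" by (rule image_cong[OF refl h(2)])
  have hC: "h ` C = f ` C" by (rule image_cong[OF refl]) (use C(2) h(2) in blast)
  have "VS.span (h ` C) = h ` VS.span C" by (rule VP.linear_span_image[OF h(1)])
  have "f ` S = h ` VS.span C" using hS C(3) by simp
  also have "\<dots> = VS.span (f ` C)" using hC \<open>VS.span (h ` C) = h ` VS.span C\<close> by simp
  finally have "f ` S = VS.span (f ` C)" .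
  moreover have "f ` C \<subseteq> f ` S" using C(2) by blast
  ultimately show ?thesis unfolding fin_dim_iff using C(1) finite_imageI by blast
qed

lemma coker_fin_enc:
  fixes A B Q :: "('k::field) pmod"
  assumes A: "fin_enc A" and B: "fin_enc B" and g: "is_hom A B g" and Q: "is_coker A B g Q q"
  shows "fin_enc Q"
proof -
  have pA: "is_pmod A" and pB: "is_pmod B" using A B by (auto simp: fin_enc_iff)
  have pQ: "is_pmod Q" and hq: "is_hom B Q q" and surj: "\<And>t. q t ` sp B t = sp Q t"
    and ker: "\<And>t. {v \<in> sp B t. q t v = 0} = g t ` sp A t"
    using Q by (auto simp: is_coker_def vzero_eq)
  obtain \<pi>1 \<pi>2 where e1: "enc A \<pi>1" and e2: "enc B \<pi>2" using A B by (auto simp: fin_enc_iff)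
  have fdQ: "fin_dim (sp Q t)" for t
    using fin_dim_image[OF hom_lin[OF hq] pmod_sub[OF pB]] B surj by (simp add: fin_enc_iff)
  let ?\<pi> = "\<lambda>t. \<pi>1 t + \<pi>2 t"
  have "enc Q ?\<pi>"
    unfolding enc_def
  proof (intro conjI allI impI)
    show "mono ?\<pi>" "finite (range ?\<pi>)" using enc_sum[OF e1 e2] by auto
    fix s t assume h: "s \<le> t \<and> ?\<pi> s = ?\<pi> t"
    then have st: "s \<le> t" by simp
    have eq: "\<pi>1 s = \<pi>1 t" "\<pi>2 s = \<pi>2 t" using enc_sum(3)[OF e1 e2] h by blast+
    have bA: "bij_betw (mp A s t) (sp A s) (sp A t)" using enc_bij[OF e1] h eq by blast
    have bB: "bij_betw (mp B s t) (sp B s) (sp B t)" using enc_bij[OF e2] h eq by blast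
    have linQ: "lin_on (sp Q s) (sp Q t) (mp Q s t)" by (rule pmod_lin[OF pQ st])
    show "bij_betw (mp Q s t) (sp Q s) (sp Q t)"
      unfolding bij_betw_def
    proof
      show "inj_on (mp Q s t) (sp Q s)"
      proof (rule inj_onI)
        fix y1 y2 assume y: "y1 \<in> sp Q s" "y2 \<in> sp Q s" "mp Q s t y1 = mp Q s t y2"
        obtain x1 where x1: "x1 \<in> sp B s" "y1 = q s x1" using y(1) surj[of s] by blast
        obtain x2 where x2: "x2 \<in> sp B s" "y2 = q s x2" using y(2) surj[of s] by blast
        define d where "d = x1 - x2"
        have d: "d \<in> sp B s" unfolding d_def using VS.subspace_diff[OF pmod_sub[OF pB] x1(1) x2(1)] .
        have qd: "q s d = y1 - y2" unfolding d_def using lin_on_diff[OF hom_lin[OF hq] pmod_sub[OF pB] x1(1) x2(1)] x1 x2 by simp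
        have mpd: "mp B s t d \<in> sp B t" using lin_onD(1)[OF pmod_lin[OF pB st] d] .
        have "q t (mp B s t d) = mp Q s t (q s d)" by (rule hom_comm[OF hq st d])
        also have "\<dots> = mp Q s t y1 - mp Q s t y2" using qd lin_on_diff[OF linQ pmod_sub[OF pQ] y(1,2)] by simp
        also have "\<dots> = 0" using y(3) by simp
        finally have "mp B s t d \<in> g t ` sp A t" using ker[of t] mpd by blast
        then obtain a where a: "a \<in> sp A t" "mp B s t d = g t a" by blast
        obtain a' where a': "a' \<in> sp A s" "a = mp A s t a'" using bA a(1) by (auto simp: bij_betw_def)
        have "mp B s t d = mp B s t (g s a')" using a a' hom_comm[OF g st a'(1)] by simp
        moreover have "g s a' \<in> sp B s" using lin_onD(1)[OF hom_lin[OF g] a'(1)] .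
        ultimately have "d = g s a'" using bB d by (auto simp: bij_betw_def inj_on_def)
        then have "q s d = 0" using ker[of s] a'(1) by blast
        then show "y1 = y2" using qd by simp
      qed
      show "mp Q s t ` sp Q s = sp Q t"
      proof
        show "mp Q s t ` sp Q s \<subseteq> sp Q t" using lin_onD(1)[OF linQ] by blast
        show "sp Q t \<subseteq> mp Q s t ` sp Q s"
        proof
          fix y assume "y \<in> sp Q t"
          then obtain x where x: "x \<in> sp B t" "y = q t x" using surj[of t] by blast
          obtain x' where x': "x' \<in> sp B s" "x = mp B s t x'" using bB x(1) by (auto simp: bij_betw_def)
          have "y = mp Q s t (q s x')" using hom_comm[OF hq st x'(1)] x x' by simp
          moreover have "q s x' \<in> sp Q s" using surj[of s] x'(1) by blast
          ultimately show "y \<in> mp Q s t ` sp Q s" by blast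
        qed
      qed
    qed
  qed
  then show ?thesis using pQ fdQ by (auto simp: fin_enc_iff)
qed

definition lfun :: "(nat \<Rightarrow> 'k::field) set \<Rightarrow> ((nat \<Rightarrow> 'k) \<Rightarrow> 'k) \<Rightarrow> bool" where
  "lfun S \<phi> \<longleftrightarrow> (\<forall>u\<in>S. \<forall>v\<in>S. \<phi> (u + v) = \<phi> u + \<phi> v) \<and> (\<forall>c. \<forall>v\<in>S. \<phi> (vscale c v) = c * \<phi> v)"

lemma lfun_add: "lfun S \<phi> \<Longrightarrow> u \<in> S \<Longrightarrow> v \<in> S \<Longrightarrow> \<phi> (u + v) = \<phi> u + \<phi> v"
  by (simp add: lfun_def)
lemma lfun_scale: "lfun S \<phi> \<Longrightarrow> v \<in> S \<Longrightarrow> \<phi> (vscale c v) = c * \<phi> v"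
  by (simp add: lfun_def)
lemma lfun_0: "lfun S \<phi> \<Longrightarrow> lsub S \<Longrightarrow> \<phi> 0 = 0"
  using lfun_scale[of S \<phi> 0 0] VS.subspace_0[of S] by simp
lemma lfun_diff: assumes "lfun S \<phi>" "lsub S" "u \<in> S" "v \<in> S" shows "\<phi> (u - v) = \<phi> u - \<phi> v"
proof -
  have "\<phi> (u - v) + \<phi> v = \<phi> (u - v + v)" using lfun_add[OF assms(1) VS.subspace_diff[OF assms(2,3,4)] assms(4)] by simp
  then show ?thesis by (simp add: algebra_simps)
qed

lemma sp_intsum_cons:
  "v \<in> sp (intsum (I # Is)) t \<longleftrightarrow> (t \<notin> I \<longrightarrow> v 0 = 0) \<and> (\<lambda>j. v (Suc j)) \<in> sp (intsum Is) t"
proof -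
  have "v \<in> sp (intsum (I # Is)) t \<longleftrightarrow> (\<forall>i. (i < Suc (length Is) \<longrightarrow> t \<notin> (I # Is) ! i \<longrightarrow> v i = 0)
                                   \<and> (Suc (length Is) \<le> i \<longrightarrow> v i = 0))" by (simp add: intsum_def)
  also have "\<dots> \<longleftrightarrow> (t \<notin> I \<longrightarrow> v 0 = 0) \<and> (\<forall>j. (j < length Is \<longrightarrow> t \<notin> Is ! j \<longrightarrow> v (Suc j) = 0)
                                   \<and> (length Is \<le> j \<longrightarrow> v (Suc j) = 0))"
    (is "?L \<longleftrightarrow> ?R")
  proof
    assume L: ?L
    show ?R
    proof (intro conjI allI impI)
      show "t \<notin> I \<Longrightarrow> v 0 = 0" using L[rule_format, of 0] by simp
      fix j show "j < length Is \<Longrightarrow> t \<notin> Is ! j \<Longrightarrow> v (Suc j) = 0" using L[rule_format, of "Suc j"] by simp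
      show "length Is \<le> j \<Longrightarrow> v (Suc j) = 0" using L[rule_format, of "Suc j"] by simp
    qed
  next
    assume R: ?R
    show ?L
    proof (intro allI conjI impI)
      fix i show "i < Suc (length Is) \<Longrightarrow> t \<notin> (I # Is) ! i \<Longrightarrow> v i = 0"
        using R by (cases i) auto
      show "Suc (length Is) \<le> i \<Longrightarrow> v i = 0" using R by (cases i) auto
    qed
  qed
  also have "\<dots> \<longleftrightarrow> (t \<notin> I \<longrightarrow> v 0 = 0) \<and> (\<lambda>j. v (Suc j)) \<in> sp (intsum Is) t"
    by (simp add: intsum_def)
  finally show ?thesis .
qed

lemma mp_intsum_cons:
  "mp (intsum (I # Is)) s t v = (\<lambda>i. if i = 0 then (if t \<in> I then v 0 else 0)
       else mp (intsum Is) s t (\<lambda>j. v (Suc j)) (i - 1))"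
  by (auto simp: intsum_def fun_eq_iff split: nat.splits)


definition kmod :: "('k::field) pmod \<Rightarrow> (real \<Rightarrow> (nat \<Rightarrow> 'k) \<Rightarrow> 'k) \<Rightarrow> 'k pmod" where
  "kmod X r = \<lparr>sp = (\<lambda>t. {v \<in> sp X t. r t v = 0}), mp = mp X\<rparr>"

lemma sp_kmod: "sp (kmod X r) t = {v \<in> sp X t. r t v = 0}" by (simp add: kmod_def)
lemma mp_kmod: "mp (kmod X r) = mp X" by (simp add: kmod_def)

lemma split_iso:
  fixes X :: "'k::field pmod" and r :: "real \<Rightarrow> (nat \<Rightarrow> 'k) \<Rightarrow> 'k" and e :: "real \<Rightarrow> nat \<Rightarrow> 'k"
  assumes X: "is_pmod X"
   and R1: "\<And>t. lfun (sp X t) (r t)"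
   and R0: "\<And>t v. t \<notin> I \<Longrightarrow> r t v = 0"
   and R2: "\<And>s t x. s \<le> t \<Longrightarrow> t \<in> I \<Longrightarrow> x \<in> sp X s \<Longrightarrow> r t (mp X s t x) = r s x"
   and E1: "\<And>t. t \<in> I \<Longrightarrow> e t \<in> sp X t" "\<And>t. t \<notin> I \<Longrightarrow> e t = 0"
   and E2: "\<And>s t. s \<le> t \<Longrightarrow> s \<in> I \<Longrightarrow> mp X s t (e s) = e t"
   and E3: "\<And>t. t \<in> I \<Longrightarrow> r t (e t) = 1"
   and psi: "is_hom (kmod X r) (intsum Is) \<psi>" "\<And>t. bij_betw (\<psi> t) (sp (kmod X r) t) (sp (intsum Is) t)"
  shows "pmod_iso X (intsum (I # Is))"
proof -
  let ?K = "kmod X r"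
  have sub: "lsub (sp X t)" for t by (rule pmod_sub[OF X])
  have e_in: "e t \<in> sp X t" for t using E1 VS.subspace_0[OF sub] by (cases "t \<in> I") auto
  define xp where "xp t x = x - vscale (r t x) (e t)" for t x
  have xp_X: "xp t x \<in> sp X t" if "x \<in> sp X t" for t x
    unfolding xp_def by (rule VS.subspace_diff[OF sub that VS.subspace_scale[OF sub e_in]])
  have r_xp: "r t (xp t x) = 0" if "x \<in> sp X t" for t x
  proof (cases "t \<in> I")
    case True
    have "r t (xp t x) = r t x - r t x * r t (e t)"
      unfolding xp_def using lfun_diff[OF R1 sub that VS.subspace_scale[OF sub e_in]] lfun_scale[OF R1 e_in] by simp
    then show ?thesis using E3[OF True] by simp
  qed (simp add: R0)
  have xp_K: "xp t x \<in> sp ?K t" if "x \<in> sp X t" for t x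
    using xp_X[OF that] r_xp[OF that] by (simp add: sp_kmod)
  have xp_add: "xp t (u + v) = xp t u + xp t v" if "u \<in> sp X t" "v \<in> sp X t" for t u v
    unfolding xp_def using lfun_add[OF R1 that] by (simp add: VS.scale_left_distrib algebra_simps)
  have xp_scale: "xp t (vscale c v) = vscale c (xp t v)" if "v \<in> sp X t" for t c v
    unfolding xp_def using lfun_scale[OF R1 that] by (simp add: VS.scale_right_diff_distrib)
  have linpsi: "lin_on (sp ?K t) (sp (intsum Is) t) (\<psi> t)" for t by (rule hom_lin[OF psi(1)])
  define \<Phi> where "\<Phi> t x = (\<lambda>i. if i = 0 then r t x else \<psi> t (xp t x) (i - 1))" for t x
  have Phi_tail: "(\<lambda>j. \<Phi> t x (Suc j)) = \<psi> t (xp t x)" for t x by (simp add: \<Phi>_def)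
  have Phi_0: "\<Phi> t x 0 = r t x" for t x by (simp add: \<Phi>_def)
  have Phi_eq: "\<Phi> t x = w \<longleftrightarrow> r t x = w 0 \<and> \<psi> t (xp t x) = (\<lambda>j. w (Suc j))" for t x w
  proof
    assume "\<Phi> t x = w" then show "r t x = w 0 \<and> \<psi> t (xp t x) = (\<lambda>j. w (Suc j))"
      using Phi_tail[of t x] Phi_0[of t x] by simp
  next
    assume h: "r t x = w 0 \<and> \<psi> t (xp t x) = (\<lambda>j. w (Suc j))"
    show "\<Phi> t x = w"
    proof
      fix i show "\<Phi> t x i = w i"
        using h fun_cong[OF conjunct2[OF h], of "i - 1"] by (cases i) (auto simp: \<Phi>_def)
    qed
  qed
  have Phi_in: "\<Phi> t x \<in> sp (intsum (I # Is)) t" if "x \<in> sp X t" for t x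
    unfolding sp_intsum_cons Phi_tail Phi_0 using R0 lin_onD(1)[OF linpsi xp_K[OF that]] by simp
  have hom: "is_hom X (intsum (I # Is)) \<Phi>"
    unfolding is_hom_def
  proof (intro conjI allI impI)
    fix t
    show "lin_on (sp X t) (sp (intsum (I # Is)) t) (\<Phi> t)"
      unfolding lin_on_iff
    proof (intro conjI ballI allI)
      fix v assume "v \<in> sp X t" then show "\<Phi> t v \<in> sp (intsum (I # Is)) t" by (rule Phi_in)
    next
      fix u v assume uv: "u \<in> sp X t" "v \<in> sp X t"
      have tl: "(\<lambda>j. (\<Phi> t u + \<Phi> t v) (Suc j)) = \<psi> t (xp t u) + \<psi> t (xp t v)"
        by (simp add: \<Phi>_def plus_fun_def)
      show "\<Phi> t (u + v) = \<Phi> t u + \<Phi> t v"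
        unfolding Phi_eq tl
        using lfun_add[OF R1 uv] xp_add[OF uv] lin_onD(2)[OF linpsi xp_K[OF uv(1)] xp_K[OF uv(2)]]
        by (simp add: Phi_0)
    next
      fix c v assume v: "v \<in> sp X t"
      have tl: "(\<lambda>j. (vscale c (\<Phi> t v)) (Suc j)) = vscale c (\<psi> t (xp t v))"
        by (simp add: \<Phi>_def vscale_def)
      have h0: "vscale c (\<Phi> t v) 0 = c * r t v" by (simp add: \<Phi>_def vscale_def)
      show "\<Phi> t (vscale c v) = vscale c (\<Phi> t v)"
        unfolding Phi_eq tl h0
        using lfun_scale[OF R1 v] xp_scale[OF v] lin_onD(3)[OF linpsi xp_K[OF v]]
        by simp
    qed
  next
    fix s t x assume st: "s \<le> t" and x: "x \<in> sp X s"
    have mx: "mp X s t x \<in> sp X t" using lin_onD(1)[OF pmod_lin[OF X st] x] .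
    have linmp: "lin_on (sp X s) (sp X t) (mp X s t)" by (rule pmod_lin[OF X st])
    have r0: "r t (mp X s t x) = (if t \<in> I then r s x else 0)" using R2[OF st _ x] R0 by auto
    have "xp t (mp X s t x) = mp X s t (xp s x)"
    proof -
      have "mp X s t (xp s x) = mp X s t x - vscale (r s x) (mp X s t (e s))"
        unfolding xp_def using lin_on_diff[OF linmp sub x VS.subspace_scale[OF sub e_in]] lin_onD(3)[OF linmp e_in] by simp
      moreover have "vscale (r s x) (mp X s t (e s)) = vscale (r t (mp X s t x)) (e t)"
      proof (cases "s \<in> I")
        case True
        then show ?thesis using E2[OF st True] r0 E1(2) by (cases "t \<in> I") auto
      next
        case False
        then show ?thesis using R0[OF False] r0 E1(2) R0 by (cases "t \<in> I") auto
      qed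
      ultimately show ?thesis unfolding xp_def by simp
    qed
    moreover have "\<psi> t (mp X s t (xp s x)) = mp (intsum Is) s t (\<psi> s (xp s x))"
      using hom_comm[OF psi(1) st xp_K[OF x]] by (simp add: mp_kmod)
    ultimately show "\<Phi> t (mp X s t x) = mp (intsum (I # Is)) s t (\<Phi> s x)"
      unfolding Phi_eq mp_intsum_cons using r0 by (simp add: Phi_tail Phi_0)
  qed
  have bij: "bij_betw (\<Phi> t) (sp X t) (sp (intsum (I # Is)) t)" for t
    unfolding bij_betw_def
  proof
    have injpsi: "inj_on (\<psi> t) (sp ?K t)" using psi(2)[of t] by (simp add: bij_betw_def)
    show "inj_on (\<Phi> t) (sp X t)"
    proof (rule inj_onI)
      fix u v assume uv: "u \<in> sp X t" "v \<in> sp X t" "\<Phi> t u = \<Phi> t v"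
      have "\<Phi> t u 0 = \<Phi> t v 0" using uv(3) by simp
      then have r: "r t u = r t v" unfolding Phi_0 .
      have "(\<lambda>j. \<Phi> t u (Suc j)) = (\<lambda>j. \<Phi> t v (Suc j))" using uv(3) by simp
      then have "\<psi> t (xp t u) = \<psi> t (xp t v)" unfolding Phi_tail .
      then have "xp t u = xp t v" using inj_onD[OF injpsi _ xp_K[OF uv(1)] xp_K[OF uv(2)]] by blast
      then have "u - vscale (r t u) (e t) = v - vscale (r t u) (e t)" using r unfolding xp_def by simp
      then show "u = v" by simp
    qed
    show "\<Phi> t ` sp X t = sp (intsum (I # Is)) t"
    proof
      show "\<Phi> t ` sp X t \<subseteq> sp (intsum (I # Is)) t" using Phi_in by blast
      show "sp (intsum (I # Is)) t \<subseteq> \<Phi> t ` sp X t"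
      proof
        fix w :: "nat \<Rightarrow> 'k" assume w: "w \<in> sp (intsum (I # Is)) t"
        then have w0: "t \<notin> I \<Longrightarrow> w 0 = 0" and wt: "(\<lambda>j. w (Suc j)) \<in> sp (intsum Is) t"
          unfolding sp_intsum_cons by blast+
        obtain x0 where x0: "x0 \<in> sp ?K t" "\<psi> t x0 = (\<lambda>j. w (Suc j))"
        proof -
          have "(\<lambda>j. w (Suc j)) \<in> \<psi> t ` sp ?K t" using psi(2)[of t] wt by (simp add: bij_betw_def)
          then obtain y where "y \<in> sp ?K t" "(\<lambda>j. w (Suc j)) = \<psi> t y" by (rule imageE)
          then show ?thesis using that by simp
        qed
        have x0X: "x0 \<in> sp X t" "r t x0 = 0" using x0(1) by (auto simp: sp_kmod)
        define x where "x = x0 + vscale (w 0) (e t)"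
        have xX: "x \<in> sp X t" unfolding x_def by (rule VS.subspace_add[OF sub x0X(1) VS.subspace_scale[OF sub e_in]])
        have rx: "r t x = w 0"
        proof (cases "t \<in> I")
          case True
          then show ?thesis unfolding x_def
            using lfun_add[OF R1 x0X(1) VS.subspace_scale[OF sub e_in]] lfun_scale[OF R1 e_in] x0X(2) E3 by simp
        next
          case False then show ?thesis using R0 w0 by simp
        qed
        have "xp t x = x - vscale (w 0) (e t)" unfolding xp_def rx ..
        also have "\<dots> = x0" unfolding x_def by simp
        finally have "xp t x = x0" .
        then have "\<Phi> t x = w" unfolding Phi_eq using rx x0(2) by blast
        then show "w \<in> \<Phi> t ` sp X t" using xX by blast
      qed
    qed
  qed
  show ?thesis unfolding pmod_iso_def using hom bij by blast
qed

lemma inv_lin: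
  assumes f: "lin_on S T f" "bij_betw f S T" and S: "lsub S" and T: "lsub T"
  shows "lin_on T S (the_inv_into S f)"
  unfolding lin_on_iff
proof (intro conjI ballI allI)
  have inj: "inj_on f S" using f(2) by (simp add: bij_betw_def)
  have inv_in: "the_inv_into S f y \<in> S" if "y \<in> T" for y
    using the_inv_into_into[OF inj, of y S] that f(2) by (simp add: bij_betw_def)
  have f_inv: "f (the_inv_into S f y) = y" if "y \<in> T" for y
    using f_the_inv_into_f_bij_betw[OF f(2) that] .
  fix v assume v: "v \<in> T" then show "the_inv_into S f v \<in> S" by (rule inv_in)
  fix u assume u: "u \<in> T"
  have "f (the_inv_into S f u + the_inv_into S f v) = u + v"
    using lin_onD(2)[OF f(1) inv_in[OF u] inv_in[OF v]] f_inv u v by simp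
  then show "the_inv_into S f (u + v) = the_inv_into S f u + the_inv_into S f v"
    using the_inv_into_f_f[OF inj VS.subspace_add[OF S inv_in[OF u] inv_in[OF v]]] by simp
next
  have inj: "inj_on f S" using f(2) by (simp add: bij_betw_def)
  have inv_in: "the_inv_into S f y \<in> S" if "y \<in> T" for y
    using the_inv_into_into[OF inj, of y S] that f(2) by (simp add: bij_betw_def)
  have f_inv: "f (the_inv_into S f y) = y" if "y \<in> T" for y
    using f_the_inv_into_f_bij_betw[OF f(2) that] .
  fix c v assume v: "v \<in> T"
  have "f (vscale c (the_inv_into S f v)) = vscale c v"
    using lin_onD(3)[OF f(1) inv_in[OF v]] f_inv v by simp
  then show "the_inv_into S f (vscale c v) = vscale c (the_inv_into S f v)"
    using the_inv_into_f_f[OF inj VS.subspace_scale[OF S inv_in[OF v]], of c] by simp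
qed

definition G :: "('k::field) pmod \<Rightarrow> real \<Rightarrow> real \<Rightarrow> (nat \<Rightarrow> 'k) \<Rightarrow> (nat \<Rightarrow> 'k)" where
  "G X a b x = (if a \<le> b then mp X a b x else the_inv_into (sp X b) (mp X b a) x)"

context
  fixes X :: "('k::field) pmod" and \<pi> :: "real \<Rightarrow> nat"
  assumes X: "is_pmod X" and E: "enc X \<pi>"
begin

lemma monoE: "s \<le> t \<Longrightarrow> \<pi> s \<le> \<pi> t" using E by (auto simp: enc_def mono_def)

lemma bijE: "s \<le> t \<Longrightarrow> \<pi> s = \<pi> t \<Longrightarrow> bij_betw (mp X s t) (sp X s) (sp X t)"
  using enc_bij[OF E] .

lemma G_fwd: "b < a \<Longrightarrow> \<pi> a = \<pi> b \<Longrightarrow> x \<in> sp X a \<Longrightarrow> mp X b a (G X a b x) = x"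
  unfolding G_def using f_the_inv_into_f_bij_betw[OF bijE] by simp

lemma G_back: "b < a \<Longrightarrow> \<pi> a = \<pi> b \<Longrightarrow> y \<in> sp X b \<Longrightarrow> G X a b (mp X b a y) = y"
  unfolding G_def using the_inv_into_f_f[OF bij_betw_imp_inj_on[OF bijE]] by simp

lemma G_in: "x \<in> sp X a \<Longrightarrow> a \<le> b \<or> \<pi> a = \<pi> b \<Longrightarrow> G X a b x \<in> sp X b"
proof (cases "a \<le> b")
  case True
  assume "x \<in> sp X a"
  then show ?thesis using True lin_onD(1)[OF pmod_lin[OF X True]] by (simp add: G_def)
next
  case False
  assume x: "x \<in> sp X a" and h: "a \<le> b \<or> \<pi> a = \<pi> b"
  then have ba: "b \<le> a" "\<pi> b = \<pi> a" using False by auto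
  have "the_inv_into (sp X b) (mp X b a) x \<in> sp X b"
    using the_inv_into_into[OF bij_betw_imp_inj_on[OF bijE[OF ba]] _ subset_refl] x bijE[OF ba]
    by (simp add: bij_betw_def)
  then show ?thesis using False by (simp add: G_def)
qed

lemma G_lin: "a \<le> b \<or> \<pi> a = \<pi> b \<Longrightarrow> lin_on (sp X a) (sp X b) (G X a b)"
proof (cases "a \<le> b")
  case True
  have "lin_on (sp X a) (sp X b) (mp X a b)" by (rule pmod_lin[OF X True])
  moreover have "G X a b = mp X a b" using True by (simp add: G_def fun_eq_iff)
  ultimately show ?thesis by simp
next
  case False
  assume h: "a \<le> b \<or> \<pi> a = \<pi> b"
  then have ba: "b \<le> a" "\<pi> b = \<pi> a" using False by auto
  have "lin_on (sp X a) (sp X b) (the_inv_into (sp X b) (mp X b a))"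
    by (rule inv_lin[OF pmod_lin[OF X ba(1)] bijE[OF ba] pmod_sub[OF X] pmod_sub[OF X]])
  moreover have "G X a b = the_inv_into (sp X b) (mp X b a)" using False by (simp add: G_def fun_eq_iff)
  ultimately show ?thesis by simp
qed

lemma Gcomp1:
  assumes st: "s \<le> t" and x: "x \<in> sp X a" and h: "a \<le> s \<or> \<pi> a = \<pi> s"
  shows "mp X s t (G X a s x) = G X a t x"
proof (cases "a \<le> s")
  case True
  then show ?thesis using st pmod_comp[OF X True st x] by (simp add: G_def)
next
  case False
  then have sa: "s < a" "\<pi> a = \<pi> s" using h by auto
  have y: "G X a s x \<in> sp X s" using G_in[OF x] h by blast
  have my: "mp X s a (G X a s x) = x" using G_fwd[OF sa x] .
  show ?thesis
  proof (cases "a \<le> t")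
    case True
    have "mp X s t (G X a s x) = mp X a t (mp X s a (G X a s x))"
      using pmod_comp[OF X less_imp_le[OF sa(1)] True y] pmod_comp[OF X st _ y] by simp
    also have "\<dots> = mp X a t x" using my by simp
    finally show ?thesis using True by (simp add: G_def)
  next
    case ta: False
    then have pt: "\<pi> t = \<pi> a" using monoE[OF st] monoE[of t a] sa by auto
    have z: "mp X s t (G X a s x) \<in> sp X t" using lin_onD(1)[OF pmod_lin[OF X st] y] .
    have "G X a t (mp X t a (mp X s t (G X a s x))) = mp X s t (G X a s x)"
      using G_back[of t a] ta pt z by simp
    moreover have "mp X t a (mp X s t (G X a s x)) = x"
      using pmod_comp[OF X st _ y] ta my by simp
    ultimately show ?thesis by simp
  qed
qed

lemma Gcomp3:
  assumes st: "s \<le> t" and x: "x \<in> sp X s" and ht: "t \<le> b \<or> \<pi> t = \<pi> b" and hs: "s \<le> b \<or> \<pi> s = \<pi> b"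
  shows "G X t b (mp X s t x) = G X s b x"
proof (cases "t \<le> b")
  case True
  then show ?thesis using st pmod_comp[OF X st True x] by (simp add: G_def)
next
  case tb: False
  then have pt: "\<pi> t = \<pi> b" "b < t" using ht by auto
  show ?thesis
  proof (cases "s \<le> b")
    case True
    have y: "mp X s b x \<in> sp X b" using lin_onD(1)[OF pmod_lin[OF X True] x] .
    have "mp X s t x = mp X b t (mp X s b x)" using pmod_comp[OF X True less_imp_le[OF pt(2)] x] by simp
    then have "G X t b (mp X s t x) = mp X s b x" using G_back[OF pt(2) pt(1) y] by simp
    then show ?thesis using True by (simp add: G_def)
  next
    case False
    then have ps: "\<pi> s = \<pi> b" "b < s" using hs by auto
    have y: "G X s b x \<in> sp X b" using G_in[OF x] hs by blast
    have "mp X s t x = mp X s t (mp X b s (G X s b x))" using G_fwd[OF ps(2) ps(1) x] by simp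
    also have "\<dots> = mp X b t (G X s b x)" using pmod_comp[OF X less_imp_le[OF ps(2)] st y] .
    finally show ?thesis using G_back[OF pt(2) pt(1) y] by simp
  qed
qed

end

lemma functional_exists:
  fixes S :: "(nat \<Rightarrow> 'k::field) set"
  assumes "e \<in> S" "e \<noteq> 0"
  obtains \<phi> where "lfun S \<phi>" "\<phi> e = 1"
proof -
  have ind: "VS.independent {e}" using assms(2) by simp
  obtain B where B: "{e} \<subseteq> B" "B \<subseteq> S" "VS.independent B" "S \<subseteq> VS.span B"
  proof -
    have "{e} \<subseteq> S" using assms(1) by simp
    from VS.maximal_independent_subset_extend[OF this ind] show ?thesis using that by blast
  qed
  define \<phi> where "\<phi> x = VS.representation B x e" for x
  have "lfun S \<phi>"
    unfolding lfun_def \<phi>_def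
  proof (intro conjI ballI allI)
    fix u v assume uv: "u \<in> S" "v \<in> S"
    have "VS.representation B (u + v) = (\<lambda>b. VS.representation B u b + VS.representation B v b)"
      using VS.representation_add[OF B(3), of v u] uv B(4) by (simp add: subset_iff)
    then show "VS.representation B (u + v) e = VS.representation B u e + VS.representation B v e"
      by simp
  next
    fix c v assume v: "v \<in> S"
    have "VS.representation B (vscale c v) = (\<lambda>b. c * VS.representation B v b)"
      using VS.representation_scale[OF B(3), of v c] v B(4) by (simp add: subset_iff)
    then show "VS.representation B (vscale c v) e = c * VS.representation B v e"
      by simp
  qed
  moreover have "\<phi> e = 1" unfolding \<phi>_def using VS.representation_basis[OF B(3)] B(1) by simp
  ultimately show ?thesis using that by blast
qed


lemma lfun_zero: "lfun S (\<lambda>v. 0)" by (simp add: lfun_def)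

lemma lfun_comp: assumes "lin_on S T g" "lfun T \<phi>" shows "lfun S (\<lambda>x. \<phi> (g x))"
  unfolding lfun_def
proof (intro conjI ballI allI)
  fix u v assume "u \<in> S" "v \<in> S"
  then show "\<phi> (g (u + v)) = \<phi> (g u) + \<phi> (g v)"
    using lin_onD(1,2)[OF assms(1)] lfun_add[OF assms(2)] by simp
next
  fix c v assume "v \<in> S"
  then show "\<phi> (g (vscale c v)) = c * \<phi> (g v)"
    using lin_onD(1,3)[OF assms(1)] lfun_scale[OF assms(2)] by simp
qed

lemma split_exists:
  fixes X :: "'k::field pmod"
  assumes X: "is_pmod X" and E: "enc X \<pi>" and nz: "\<exists>t. sp X t \<noteq> {0}"
  shows "\<exists>I r e t1. is_intv I \<and> (\<forall>t. lfun (sp X t) (r t)) \<and> (\<forall>t v. t \<notin> I \<longrightarrow> r t v = 0)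
     \<and> (\<forall>s t x. s \<le> t \<longrightarrow> t \<in> I \<longrightarrow> x \<in> sp X s \<longrightarrow> r t (mp X s t x) = r s x)
     \<and> (\<forall>t. t \<in> I \<longrightarrow> e t \<in> sp X t) \<and> (\<forall>t. t \<notin> I \<longrightarrow> e t = 0)
     \<and> (\<forall>s t. s \<le> t \<longrightarrow> s \<in> I \<longrightarrow> mp X s t (e s) = e t)
     \<and> (\<forall>t. t \<in> I \<longrightarrow> r t (e t) = 1)
     \<and> (\<forall>s t. \<pi> s = \<pi> t \<longrightarrow> (s \<in> I \<longleftrightarrow> t \<in> I)) \<and> t1 \<in> I"
proof -
  have sub: "lsub (sp X t)" for t by (rule pmod_sub[OF X])
  have zin: "0 \<in> sp X t" for t by (rule VS.subspace_0[OF sub])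
  have mono: "s \<le> t \<Longrightarrow> \<pi> s \<le> \<pi> t" for s t by (rule monoE[OF X E])
  have finr: "finite (range \<pi>)" using E by (simp add: enc_def)
  define NZ where "NZ = {j \<in> range \<pi>. \<exists>t. \<pi> t = j \<and> sp X t \<noteq> {0}}"
  have fNZ: "finite NZ" using finr unfolding NZ_def by simp
  have neNZ: "NZ \<noteq> {}" using nz unfolding NZ_def by blast
  define Fm where "Fm = Min NZ"
  have "Fm \<in> NZ" unfolding Fm_def using fNZ neNZ by (rule Min_in)
  then obtain t0 where t0: "\<pi> t0 = Fm" "sp X t0 \<noteq> {0}" unfolding NZ_def by blast
  have zero_below: "sp X t = {0}" if "\<pi> t < Fm" for t
  proof (rule ccontr)
    assume "sp X t \<noteq> {0}"
    then have "\<pi> t \<in> NZ" unfolding NZ_def by blast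
    then have "Fm \<le> \<pi> t" unfolding Fm_def using fNZ by simp
    then show False using that by simp
  qed
  obtain v0 where v0: "v0 \<in> sp X t0" "v0 \<noteq> 0" using t0(2) zin by blast
  define Sv where "Sv = {t. t0 \<le> t \<and> mp X t0 t v0 \<noteq> 0}"
  have t0Sv: "t0 \<in> Sv" unfolding Sv_def using pmod_id[OF X v0(1)] v0(2) by simp
  have fSv: "finite (\<pi> ` Sv)" using finr by (rule finite_subset[rotated]) auto
  define jm where "jm = Max (\<pi> ` Sv)"
  have "jm \<in> \<pi> ` Sv" unfolding jm_def using fSv t0Sv by (intro Max_in) auto
  then obtain t1 where t1: "t1 \<in> Sv" "\<pi> t1 = jm" by blast
  have Sv_le: "\<pi> t \<le> jm" if "t \<in> Sv" for t unfolding jm_def using fSv that by simp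
  have t01: "t0 \<le> t1" and e1nz: "mp X t0 t1 v0 \<noteq> 0" using t1(1) unfolding Sv_def by auto
  define I where "I = {t. Fm \<le> \<pi> t \<and> \<pi> t \<le> jm}"
  have t1I: "t1 \<in> I" unfolding I_def using t1 mono[OF t01] t0(1) by simp
  have intv: "is_intv I"
    unfolding is_intv_def I_def
  proof (intro conjI ballI allI impI)
    show "{t. Fm \<le> \<pi> t \<and> \<pi> t \<le> jm} \<noteq> {}" using t1I unfolding I_def by blast
    fix x z y assume "x \<in> {t. Fm \<le> \<pi> t \<and> \<pi> t \<le> jm}" "z \<in> {t. Fm \<le> \<pi> t \<and> \<pi> t \<le> jm}" "x \<le> y \<and> y \<le> z"
    then show "y \<in> {t. Fm \<le> \<pi> t \<and> \<pi> t \<le> jm}" using mono[of x y] mono[of y z] by auto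
  qed
  have conn0: "t0 \<le> t \<or> \<pi> t0 = \<pi> t" if "t \<in> I" for t
  proof (cases "t0 \<le> t")
    case False
    then have "\<pi> t \<le> \<pi> t0" using mono[of t t0] by simp
    then show ?thesis using that t0(1) unfolding I_def by simp
  qed simp
  have conn1: "t \<le> t1 \<or> \<pi> t = \<pi> t1" if "t \<in> I" for t
  proof (cases "t \<le> t1")
    case False
    then have "\<pi> t1 \<le> \<pi> t" using mono[of t1 t] by simp
    then show ?thesis using that t1(2) unfolding I_def by simp
  qed simp
  have fib: "\<forall>s t. \<pi> s = \<pi> t \<longrightarrow> (s \<in> I \<longleftrightarrow> t \<in> I)" unfolding I_def by simp
  have out_after: "t0 \<le> t \<and> mp X t0 t v0 = 0" if "s \<le> t" "s \<in> I" "t \<notin> I" for s t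
  proof -
    have "Fm \<le> \<pi> t" using that mono[of s t] unfolding I_def by simp
    then have gt: "jm < \<pi> t" using that(3) unfolding I_def by simp
    have "t0 \<le> t"
    proof (rule ccontr)
      assume "\<not> t0 \<le> t" then have "\<pi> t \<le> \<pi> t0" using mono[of t t0] by simp
      then show False using gt t0(1) t1I unfolding I_def by simp
    qed
    moreover have "t \<notin> Sv" using Sv_le gt by fastforce
    ultimately show ?thesis unfolding Sv_def by simp
  qed
  have out_before: "sp X s = {0}" if "s \<le> t" "t \<in> I" "s \<notin> I" for s t
  proof (rule zero_below)
    have "\<pi> s \<le> jm" using that mono[of s t] unfolding I_def by simp
    then show "\<pi> s < Fm" using that(3) unfolding I_def by simp
  qed
  define e1 where "e1 = mp X t0 t1 v0"
  have e1X: "e1 \<in> sp X t1" unfolding e1_def using lin_onD(1)[OF pmod_lin[OF X t01] v0(1)] .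
  obtain \<phi> where phi: "lfun (sp X t1) \<phi>" "\<phi> e1 = 1"
    using functional_exists[OF e1X] e1nz unfolding e1_def by blast
  define e where "e t = (if t \<in> I then G X t0 t v0 else 0)" for t
  define r where "r t x = (if t \<in> I then \<phi> (G X t t1 x) else 0)" for t x
  have Glin1: "lin_on (sp X t) (sp X t1) (G X t t1)" if "t \<in> I" for t
    by (rule G_lin[OF X E]) (use conn1[OF that] in blast)
  have R1: "\<forall>t. lfun (sp X t) (r t)"
  proof
    fix t show "lfun (sp X t) (r t)"
    proof (cases "t \<in> I")
      case True
      then show ?thesis unfolding r_def using lfun_comp[OF Glin1[OF True] phi(1)] by simp
    next
      case False
      then show ?thesis unfolding r_def using lfun_zero by simp
    qed
  qed
  have R0: "\<forall>t v. t \<notin> I \<longrightarrow> r t v = 0" unfolding r_def by simp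
  have R2: "\<forall>s t x. s \<le> t \<longrightarrow> t \<in> I \<longrightarrow> x \<in> sp X s \<longrightarrow> r t (mp X s t x) = r s x"
  proof (intro allI impI)
    fix s t x assume st: "s \<le> t" and tI: "t \<in> I" and x: "x \<in> sp X s"
    show "r t (mp X s t x) = r s x"
    proof (cases "s \<in> I")
      case True
      have "G X t t1 (mp X s t x) = G X s t1 x"
        by (rule Gcomp3[OF X E st x]) (use conn1[OF tI] conn1[OF True] in blast)+
      then show ?thesis unfolding r_def using True tI by simp
    next
      case False
      have "x = 0" using out_before[OF st tI False] x by simp
      then have "mp X s t x = 0" using mp_0[OF X st] by simp
      moreover have "G X t t1 0 = 0" by (rule lin_on_0[OF Glin1[OF tI] sub])
      moreover have "\<phi> 0 = 0" by (rule lfun_0[OF phi(1) sub])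
      ultimately show ?thesis unfolding r_def using False tI by simp
    qed
  qed
  have E1a: "\<forall>t. t \<in> I \<longrightarrow> e t \<in> sp X t"
  proof (intro allI impI)
    fix t assume tI: "t \<in> I"
    have "G X t0 t v0 \<in> sp X t" by (rule G_in[OF X E v0(1)]) (use conn0[OF tI] in blast)
    then show "e t \<in> sp X t" unfolding e_def using tI by simp
  qed
  have E1b: "\<forall>t. t \<notin> I \<longrightarrow> e t = 0" unfolding e_def by simp
  have E2: "\<forall>s t. s \<le> t \<longrightarrow> s \<in> I \<longrightarrow> mp X s t (e s) = e t"
  proof (intro allI impI)
    fix s t assume st: "s \<le> t" and sI: "s \<in> I"
    have c: "mp X s t (G X t0 s v0) = G X t0 t v0"
      by (rule Gcomp1[OF X E st v0(1)]) (use conn0[OF sI] in blast)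
    show "mp X s t (e s) = e t"
    proof (cases "t \<in> I")
      case True then show ?thesis unfolding e_def using sI c by simp
    next
      case False
      have "G X t0 t v0 = mp X t0 t v0" using out_after[OF st sI False] by (simp add: G_def)
      then show ?thesis unfolding e_def using sI False c out_after[OF st sI False] by simp
    qed
  qed
  have E3: "\<forall>t. t \<in> I \<longrightarrow> r t (e t) = 1"
  proof (intro allI impI)
    fix t assume tI: "t \<in> I"
    have "G X t t1 (G X t0 t v0) = e1"
    proof (cases "t \<le> t1")
      case True
      have "G X t t1 (G X t0 t v0) = mp X t t1 (G X t0 t v0)" using True by (simp add: G_def)
      also have "\<dots> = G X t0 t1 v0" by (rule Gcomp1[OF X E True v0(1)]) (use conn0[OF tI] in blast)
      also have "\<dots> = e1" unfolding e1_def using t01 by (simp add: G_def)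
      finally show ?thesis .
    next
      case False
      then have lt: "t1 < t" by simp
      have pt: "\<pi> t = \<pi> t1" using conn1[OF tI] False by blast
      have t0t: "t0 \<le> t" using t01 lt by simp
      have "G X t0 t v0 = mp X t0 t v0" using t0t by (simp add: G_def)
      also have "\<dots> = mp X t1 t e1" unfolding e1_def using pmod_comp[OF X t01 less_imp_le[OF lt] v0(1)] by simp
      finally have "G X t t1 (G X t0 t v0) = G X t t1 (mp X t1 t e1)" by simp
      also have "\<dots> = e1" by (rule G_back[OF X E lt pt e1X])
      finally show ?thesis .
    qed
    then show "r t (e t) = 1" unfolding r_def e_def using tI phi(2) by simp
  qed
  show ?thesis
    by (rule exI[where x=I], rule exI[where x=r], rule exI[where x=e], rule exI[where x=t1], intro conjI)
      (fact intv R1 R0 R2 E1a E1b E2 E3 fib t1I)+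
qed

lemma kmod_props:
  fixes X :: "'k::field pmod"
  assumes X: "is_pmod X" and fd: "\<And>t. fin_dim (sp X t)" and E: "enc X \<pi>"
    and R1: "\<forall>t. lfun (sp X t) (r t)" and R0: "\<forall>t v. t \<notin> I \<longrightarrow> r t v = 0"
    and R2: "\<forall>s t x. s \<le> t \<longrightarrow> t \<in> I \<longrightarrow> x \<in> sp X s \<longrightarrow> r t (mp X s t x) = r s x"
    and fib: "\<forall>s t. \<pi> s = \<pi> t \<longrightarrow> (s \<in> I \<longleftrightarrow> t \<in> I)"
  shows "is_pmod (kmod X r)" "\<And>t. fin_dim (sp (kmod X r) t)" "enc (kmod X r) \<pi>"
proof -
  let ?K = "kmod X r"
  have sub: "lsub (sp X t)" for t by (rule pmod_sub[OF X])
  have subK: "lsub (sp ?K t)" for t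
    unfolding sp_kmod VS.subspace_def
  proof (intro conjI ballI allI)
    show "0 \<in> {v \<in> sp X t. r t v = 0}" using VS.subspace_0[OF sub] lfun_0[OF R1[rule_format] sub] by simp
    fix x y assume "x \<in> {v \<in> sp X t. r t v = 0}" "y \<in> {v \<in> sp X t. r t v = 0}"
    then show "x + y \<in> {v \<in> sp X t. r t v = 0}"
      using VS.subspace_add[OF sub] lfun_add[OF R1[rule_format]] by simp
  next
    fix c x assume "x \<in> {v \<in> sp X t. r t v = 0}"
    then show "vscale c x \<in> {v \<in> sp X t. r t v = 0}"
      using VS.subspace_scale[OF sub] lfun_scale[OF R1[rule_format]] by simp
  qed
  have mapK: "mp X s t v \<in> sp ?K t" if st: "s \<le> t" and v: "v \<in> sp ?K s" for s t v
  proof -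
    have vX: "v \<in> sp X s" "r s v = 0" using v by (auto simp: sp_kmod)
    have "mp X s t v \<in> sp X t" using lin_onD(1)[OF pmod_lin[OF X st] vX(1)] .
    moreover have "r t (mp X s t v) = 0"
    proof (cases "t \<in> I")
      case True then show ?thesis using R2 st vX by simp
    next
      case False then show ?thesis using R0 by simp
    qed
    ultimately show ?thesis by (simp add: sp_kmod)
  qed
  show pK: "is_pmod ?K"
    unfolding is_pmod_def
  proof (intro conjI allI impI ballI)
    show "vsubspace (sp ?K t)" for t using subK vsubspace_iff by blast
    fix s t :: real assume st: "s \<le> t"
    have "lin_on (sp X s) (sp X t) (mp X s t)" by (rule pmod_lin[OF X st])
    then show "lin_on (sp ?K s) (sp ?K t) (mp ?K s t)"
      using mapK[OF st] unfolding lin_on_def mp_kmod sp_kmod by auto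
  next
    fix t v assume "v \<in> sp ?K t" then show "mp ?K t t v = v" using pmod_id[OF X] by (simp add: sp_kmod mp_kmod)
  next
    fix r' s t v assume "r' \<le> s" "s \<le> t" "v \<in> sp ?K r'"
    then show "mp ?K s t (mp ?K r' s v) = mp ?K r' t v" using pmod_comp[OF X] by (simp add: sp_kmod mp_kmod)
  qed
  show "fin_dim (sp ?K t)" for t
  proof (rule fin_dim_sub[OF subK])
    show "sp ?K t \<subseteq> sp X t" by (auto simp: sp_kmod)
    show "fin_dim (sp X t)" by (rule fd)
  qed
  show "enc ?K \<pi>"
    unfolding enc_def
  proof (intro conjI allI impI)
    show "mono \<pi>" "finite (range \<pi>)" using E by (auto simp: enc_def)
    fix s t assume h: "s \<le> t \<and> \<pi> s = \<pi> t"
    have bX: "bij_betw (mp X s t) (sp X s) (sp X t)" using enc_bij[OF E] h by blast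
    show "bij_betw (mp ?K s t) (sp ?K s) (sp ?K t)"
      unfolding bij_betw_def
    proof
      have "inj_on (mp X s t) (sp X s)" using bX by (simp add: bij_betw_def)
      then show "inj_on (mp ?K s t) (sp ?K s)" unfolding mp_kmod by (rule inj_on_subset) (auto simp: sp_kmod)
      show "mp ?K s t ` sp ?K s = sp ?K t"
      proof
        show "mp ?K s t ` sp ?K s \<subseteq> sp ?K t" using mapK h unfolding mp_kmod by blast
        show "sp ?K t \<subseteq> mp ?K s t ` sp ?K s"
        proof
          fix y assume y: "y \<in> sp ?K t"
          then have yX: "y \<in> sp X t" "r t y = 0" by (auto simp: sp_kmod)
          have "y \<in> mp X s t ` sp X s" using bX yX(1) by (simp add: bij_betw_def)
          then obtain x where x: "x \<in> sp X s" "y = mp X s t x" by blast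
          have "r s x = 0"
          proof (cases "t \<in> I")
            case True then show ?thesis using R2 h x yX(2) by simp
          next
            case False then have "s \<notin> I" using fib h by blast
            then show ?thesis using R0 by simp
          qed
          then show "y \<in> mp ?K s t ` sp ?K s" using x by (auto simp: sp_kmod mp_kmod)
        qed
      qed
    qed
  qed
qed

definition mu :: "('k::field) pmod \<Rightarrow> (real \<Rightarrow> nat) \<Rightarrow> nat" where
  "mu X \<pi> = (\<Sum>j\<in>range \<pi>. VS.dim (sp X (SOME t. \<pi> t = j)))"

lemma dim_fibre:
  fixes X :: "'k::field pmod"
  assumes X: "is_pmod X" and E: "enc X \<pi>" and st: "s \<le> t" "\<pi> s = \<pi> t"
  shows "VS.dim (sp X s) = VS.dim (sp X t)"
  by (rule dim_bij[OF pmod_lin[OF X st(1)] pmod_sub[OF X] pmod_sub[OF X] enc_bij[OF E st]])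

lemma dim_fibre':
  fixes X :: "'k::field pmod"
  assumes X: "is_pmod X" and E: "enc X \<pi>" and st: "\<pi> s = \<pi> t"
  shows "VS.dim (sp X s) = VS.dim (sp X t)"
proof (cases "s \<le> t")
  case True show ?thesis by (rule dim_fibre[OF X E True st])
next
  case False
  then have "t \<le> s" by simp
  from dim_fibre[OF X E this st[symmetric]] show ?thesis by simp
qed

lemma mu_less:
  fixes X Y :: "'k::field pmod"
  assumes X: "is_pmod X" "enc X \<pi>" "\<And>t. fin_dim (sp X t)" and Y: "is_pmod Y" "enc Y \<pi>"
    and subs: "\<And>t. sp Y t \<subseteq> sp X t" and ne: "sp Y t1 \<noteq> sp X t1"
  shows "mu Y \<pi> < mu X \<pi>"
  unfolding mu_def
proof (rule sum_strict_mono_ex1)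
  show "finite (range \<pi>)" using X(2) by (simp add: enc_def)
  show "\<forall>x\<in>range \<pi>. VS.dim (sp Y (SOME t. \<pi> t = x)) \<le> VS.dim (sp X (SOME t. \<pi> t = x))"
    using dim_mono_fin[OF pmod_sub[OF Y(1)] pmod_sub[OF X(1)] subs X(3)] by blast
  let ?a = "SOME t. \<pi> t = \<pi> t1"
  have a: "\<pi> ?a = \<pi> t1" by (rule someI) (rule refl)
  have "VS.dim (sp Y t1) < VS.dim (sp X t1)"
    using ldim_psubset[OF pmod_sub[OF Y(1)] pmod_sub[OF X(1)] _ X(3)] subs[of t1] ne by blast
  moreover have "VS.dim (sp Y ?a) = VS.dim (sp Y t1)" by (rule dim_fibre'[OF Y a])
  moreover have "VS.dim (sp X ?a) = VS.dim (sp X t1)" by (rule dim_fibre'[OF X(1,2) a])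
  ultimately show "\<exists>a\<in>range \<pi>. VS.dim (sp Y (SOME t. \<pi> t = a)) < VS.dim (sp X (SOME t. \<pi> t = a))"
    by (intro bexI[of _ "\<pi> t1"]) auto
qed

lemma zero_iso:
  fixes X :: "'k::field pmod"
  assumes X: "is_pmod X" and z: "\<forall>t. sp X t = {0}"
  shows "pmod_iso X (intsum [])"
proof -
  have spI: "sp (intsum [] :: 'k pmod) t = {0}" for t
    unfolding sp_intsum coord_def by (auto simp: fun_eq_iff)
  have mpI: "mp (intsum [] :: 'k pmod) s t 0 = 0" for s t by (simp add: mp_intsum fun_eq_iff)
  have hom: "is_hom X (intsum []) (\<lambda>t v. v)"
    unfolding is_hom_def lin_on_iff
  proof (intro conjI allI impI ballI)
    fix t v assume "v \<in> sp X t" then show "v \<in> sp (intsum []) t" using z spI by simp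
  next
    fix t u v assume "u \<in> sp X t" "v \<in> sp X t" then show "u + v = u + v" by simp
  next
    fix t c v assume "v \<in> sp X t" then show "vscale c v = vscale c v" by simp
  next
    fix s t v assume st: "s \<le> t" and v: "v \<in> sp X s"
    then have "v = 0" using z by simp
    then show "mp X s t v = mp (intsum []) s t v" using mp_0[OF X st] mpI by simp
  qed
  have "bij_betw (\<lambda>v. v) (sp X t) (sp (intsum [] :: 'k pmod) t)" for t using z spI by (simp add: bij_betw_def)
  then show ?thesis unfolding pmod_iso_def using hom by blast
qed

lemma exists_decomp_aux:
  fixes \<pi> :: "real \<Rightarrow> nat"
  shows "\<forall>X :: 'k::field pmod. is_pmod X \<and> (\<forall>t. fin_dim (sp X t)) \<and> enc X \<pi> \<and> mu X \<pi> = n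
     \<longrightarrow> (\<exists>Is. (\<forall>I\<in>set Is. is_intv I) \<and> pmod_iso X (intsum Is))"
proof (induction n rule: less_induct)
  case (less n)
  show ?case
  proof (intro allI impI)
    fix X :: "'k pmod"
    assume h: "is_pmod X \<and> (\<forall>t. fin_dim (sp X t)) \<and> enc X \<pi> \<and> mu X \<pi> = n"
    then have X: "is_pmod X" and fd: "\<And>t. fin_dim (sp X t)" and E: "enc X \<pi>" and mun: "mu X \<pi> = n" by auto
    show "\<exists>Is. (\<forall>I\<in>set Is. is_intv I) \<and> pmod_iso X (intsum Is)"
    proof (cases "\<forall>t. sp X t = {0}")
      case True
      then show ?thesis using zero_iso[OF X True] by (intro exI[of _ "[]"]) simp
    next
      case False
      then have nz: "\<exists>t. sp X t \<noteq> {0}" by blast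
      obtain I r e t1 where I: "is_intv I" and R1: "\<forall>t. lfun (sp X t) (r t)" and R0: "\<forall>t v. t \<notin> I \<longrightarrow> r t v = 0"
        and R2: "\<forall>s t x. s \<le> t \<longrightarrow> t \<in> I \<longrightarrow> x \<in> sp X s \<longrightarrow> r t (mp X s t x) = r s x"
        and E1a: "\<forall>t. t \<in> I \<longrightarrow> e t \<in> sp X t" and E1b: "\<forall>t. t \<notin> I \<longrightarrow> e t = 0"
        and E2: "\<forall>s t. s \<le> t \<longrightarrow> s \<in> I \<longrightarrow> mp X s t (e s) = e t"
        and E3: "\<forall>t. t \<in> I \<longrightarrow> r t (e t) = 1"
        and fib: "\<forall>s t. \<pi> s = \<pi> t \<longrightarrow> (s \<in> I \<longleftrightarrow> t \<in> I)" and t1: "t1 \<in> I"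
        using split_exists[OF X E nz] by blast
      let ?K = "kmod X r"
      have K: "is_pmod ?K" "\<And>t. fin_dim (sp ?K t)" "enc ?K \<pi>"
        using kmod_props[OF X fd E R1 R0 R2 fib] by blast+
      have subs: "sp ?K t \<subseteq> sp X t" for t by (auto simp: sp_kmod)
      have "e t1 \<in> sp X t1" "r t1 (e t1) = 1" using E1a E3 t1 by auto
      then have ne: "sp ?K t1 \<noteq> sp X t1"
      proof -
        assume a: "e t1 \<in> sp X t1" "r t1 (e t1) = 1"
        show ?thesis
        proof
          assume "sp ?K t1 = sp X t1"
          then have "e t1 \<in> sp ?K t1" using a(1) by simp
          then have "r t1 (e t1) = 0" by (simp add: sp_kmod)
          then show False using a(2) by simp
        qed
      qed
      have lt: "mu ?K \<pi> < n" using mu_less[OF X E fd K(1,3) subs ne] mun by simp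
      obtain Is' where Is': "\<forall>I\<in>set Is'. is_intv I" "pmod_iso ?K (intsum Is')"
        using less.IH[OF lt] K by blast
      obtain \<psi> where psi: "is_hom ?K (intsum Is') \<psi>" "\<And>t. bij_betw (\<psi> t) (sp ?K t) (sp (intsum Is') t)"
        using Is'(2) unfolding pmod_iso_def by blast
      have "pmod_iso X (intsum (I # Is'))"
      proof (rule split_iso[OF X])
        show "\<And>t. lfun (sp X t) (r t)" using R1 by blast
        show "\<And>t v. t \<notin> I \<Longrightarrow> r t v = 0" using R0 by blast
        show "\<And>s t x. s \<le> t \<Longrightarrow> t \<in> I \<Longrightarrow> x \<in> sp X s \<Longrightarrow> r t (mp X s t x) = r s x" using R2 by blast
        show "\<And>t. t \<in> I \<Longrightarrow> e t \<in> sp X t" "\<And>t. t \<notin> I \<Longrightarrow> e t = 0" using E1a E1b by blast+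
        show "\<And>s t. s \<le> t \<Longrightarrow> s \<in> I \<Longrightarrow> mp X s t (e s) = e t" using E2 by blast
        show "\<And>t. t \<in> I \<Longrightarrow> r t (e t) = 1" using E3 by blast
        show "is_hom ?K (intsum Is') \<psi>" by (rule psi(1))
        show "\<And>t. bij_betw (\<psi> t) (sp ?K t) (sp (intsum Is') t)" by (rule psi(2))
      qed
      moreover have "\<forall>J\<in>set (I # Is'). is_intv J" using I Is'(1) by simp
      ultimately show ?thesis by blast
    qed
  qed
qed

lemma exists_decomp:
  fixes X :: "'k::field pmod"
  assumes "fin_enc X"
  shows "\<exists>Is. (\<forall>I\<in>set Is. is_intv I) \<and> pmod_iso X (intsum Is)"
proof -
  obtain \<pi> where "is_pmod X" "\<forall>t. fin_dim (sp X t)" "enc X \<pi>" using assms by (auto simp: fin_enc_iff)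
  then show ?thesis using exists_decomp_aux[of \<pi> "mu X \<pi>"] by blast
qed

lemma topk_nonneg: assumes "\<forall>I\<in>set Is. is_intv I" shows "0 \<le> topk k Is"
  unfolding topk_def
proof (rule sum_list_nonneg)
  fix x assume "x \<in> set (take k (rev (sort (map ilen Is))))"
  then have "x \<in> set (rev (sort (map ilen Is)))" by (rule in_set_takeD)
  then have "x \<in> set (map ilen Is)" by simp
  then obtain I where "I \<in> set Is" "x = ilen I" by auto
  then show "0 \<le> x" using ilen_nonneg assms by simp
qed

lemma Tk_bound:
  fixes X :: "'k::field pmod"
  assumes "fin_enc X" "1 \<le> k" "1 \<le> l"
  shows "Tk l X \<le> ereal (max 1 (real l / real k)) * Tk k X \<and> 0 \<le> Tk k X"
proof -
  obtain Is where Is: "\<forall>I\<in>set Is. is_intv I" "pmod_iso X (intsum Is)" using exists_decomp[OF assms(1)] by blast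
  have X: "is_pmod X" using assms(1) by (simp add: fin_enc_iff)
  have "Tk l X = topk l Is" "Tk k X = topk k Is" using Tk_eq[OF X Is] by blast+
  then show ?thesis using topk_ineq[OF assms(2,3) Is(1)] topk_nonneg[OF Is(1)] by simp
qed

theorem mainTheorem14:
  fixes k l :: nat and M N :: "('k::field) pmod"
  assumes "k \<ge> 1" and "l \<ge> 1" and "fin_enc M" and "fin_enc N"
  shows "dpath (Tk l) M N \<le> ereal (max 1 (real l / real k)) * dpath (Tk k) M N"
proof (rule dpath_mono)
  show "0 < max 1 (real l / real k)" by simp
  fix X :: "'k pmod" assume "good_ker X \<or> good_cok X"
  then have "fin_enc X"
    unfolding good_ker_def good_cok_def using kerm_fin_enc coker_fin_enc by blast
  then show "Tk l X \<le> ereal (max 1 (real l / real k)) * Tk k X \<and> 0 \<le> Tk k X"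
    using Tk_bound assms(1,2) by blast
qed

end
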